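(* Let $p$ be a prime and $d,\ell$ positive integers. Then \[ \Gamma(d,p,\ell)=\{\operatorname{CT}(\lambda(M,w)): M\in\operatorname{CGL}_d(p)^{(\ell)},\ w\in\mathbb{F}_p^d\}. \]
   Context: Vectors in $\mathbb{F}_p^d$ are row vectors; for a $(d\times d)$-matrix $M$ over $\mathbb{F}_p$ and $v\in\mathbb{F}_p^d$, $\lambda(M,v)$ is the map $x\mapsto xM+v$ on $\mathbb{F}_p^d$. $\operatorname{AGL}_d(p)=\{\lambda(M,v):M\in\operatorname{GL}_d(p),v\in\mathbb{F}_p^d\}$. $\operatorname{CGL}_d(p)$ is the set of $A\in\operatorname{GL}_d(p)$ without eigenvalue $-1$, $\operatorname{ACGL}_d(p)=\{\lambda(A,v):A\in\operatorname{CGL}_d(p),v\in\mathbb{F}_p^d\}$, and $\operatorname{CGL}_d(p)^{(\ell)}=\{A_1\cdots A_\ell:A_i\in\operatorname{CGL}_d(p)\}$. The cycle type $\operatorname{CT}(\sigma)$ of a permutation $\sigma$ of a finite set $\Omega$ is the monomial $x_1^{k_1}\cdots x_{|\Omega|}^{k_{|\Omega|}}\in\mathbb{Q}[x_n:n\ge1]$ with $k_j$ the number of $j$-cycles of $\sigma$, and $\operatorname{CT}(X)=\{\operatorname{CT}(\sigma):\sigma\in X\}$. Define \[ \Gamma(d,p,\ell)=\begin{cases}\operatorname{CT}(\operatorname{ACGL}_d(p)), & \ell=1,\\ \operatorname{CT}(\operatorname{AGL}_d(p)), & \ell\geq2,\ (d,p)\notin\{(1,2),(1,3),(2,2)\},\\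 \emptyset, & \ell\geq2,\ (d,p)=(1,2),\\ \{x_1^3,x_3\}, & \ell\ge2,\ (d,p)=(1,3),\\ \{x_1^4,x_2^2,x_1x_3\}, & \ell\geq 2,\ (d,p)=(2,2).\end{cases} \] *)

theory Defs
  imports "Jordan_Normal_Form.Matrix" "Jordan_Normal_Form.Char_Poly" "Berlekamp_Zassenhaus.Finite_Field"
begin

text \<open>Cycle type of a permutation sigma of a finite set Omega, encoded as the exponent
  vector of the monomial x_1^k_1 ... x_n^k_n: the function j maps to k_j, the number of
  j-cycles (= orbits of size j) of sigma on Omega.\<close>
definition cyc_orbit :: "('b \<Rightarrow> 'b) \<Rightarrow> 'b \<Rightarrow> 'b set" where
  "cyc_orbit \<sigma> x = {(\<sigma> ^^ n) x | n. True}"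

definition cycle_type :: "'b set \<Rightarrow> ('b \<Rightarrow> 'b) \<Rightarrow> nat \<Rightarrow> nat" where
  "cycle_type \<Omega> \<sigma> j = card {C. \<exists>x\<in>\<Omega>. C = cyc_orbit \<sigma> x \<and> card C = j}"

definition aff :: "nat \<Rightarrow> 'a::comm_ring_1 mat \<Rightarrow> 'a vec \<Rightarrow> 'a vec \<Rightarrow> 'a vec" where
  "aff d M v x = vec d (\<lambda>j. (\<Sum>i<d. x $ i * M $$ (i, j)) + v $ j)"

definition GL :: "nat \<Rightarrow> 'a::comm_ring_1 mat set" where
  "GL d = {M. M \<in> carrier_mat d d \<and> invertible_mat M}"

definition CGL :: "nat \<Rightarrow> 'a::comm_ring_1 mat set" where
  "CGL d = {A. A \<in> GL d \<and> \<not> eigenvalue A (-1)}"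

definition CGL_pow :: "nat \<Rightarrow> nat \<Rightarrow> 'a::comm_ring_1 mat set" where
  "CGL_pow d l = {foldr (*) As (1\<^sub>m d) | As. length As = l \<and> set As \<subseteq> CGL d}"

definition CT_aff :: "nat \<Rightarrow> 'a::comm_ring_1 mat set \<Rightarrow> (nat \<Rightarrow> nat) set" where
  "CT_aff d Ms = {cycle_type (carrier_vec d) (aff d M v) | M v. M \<in> Ms \<and> v \<in> carrier_vec d}"

definition x1_3 :: "nat \<Rightarrow> nat" where "x1_3 = (\<lambda>j. if j = 1 then 3 else 0)"
definition x3 :: "nat \<Rightarrow> nat" where "x3 = (\<lambda>j. if j = 3 then 1 else 0)"
definition x1_4 :: "nat \<Rightarrow> nat" where "x1_4 = (\<lambda>j. if j = 1 then 4 else 0)"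
definition x2_2 :: "nat \<Rightarrow> nat" where "x2_2 = (\<lambda>j. if j = 2 then 2 else 0)"
definition x1x3 :: "nat \<Rightarrow> nat" where "x1x3 = (\<lambda>j. if j = 1 \<or> j = 3 then 1 else 0)"

text \<open>Gamma(d,p,l) with F_p = 'a mod_ring, p = CARD('a).\<close>
definition Gamma :: "'a::prime_card itself \<Rightarrow> nat \<Rightarrow> nat \<Rightarrow> (nat \<Rightarrow> nat) set" where
  "Gamma _ d l =
    (if l = 1 then CT_aff d (CGL d :: 'a mod_ring mat set)
     else if (d, CARD('a)) = (1, 2) then {}
     else if (d, CARD('a)) = (1, 3) then {x1_3, x3}
     else if (d, CARD('a)) = (2, 2) then {x1_4, x2_2, x1x3}
     else CT_aff d (GL d :: 'a mod_ring mat set))"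

end

theory Submission
  imports Defs
begin


lemma invertible_det:
  fixes A :: "'a::field mat"
  assumes A: "A \<in> carrier_mat n n"
  shows "invertible_mat A \<longleftrightarrow> det A \<noteq> 0"
proof
  assume "invertible_mat A"
  then obtain B where AB: "A * B = 1\<^sub>m n" and BA: "B * A = 1\<^sub>m (dim_row B)"
    using A unfolding invertible_mat_def inverts_mat_def by auto
  have "dim_col (B * A) = dim_row B" unfolding BA by simp
  hence r: "dim_row B = n" using A by simp
  have "dim_col (A * B) = n" unfolding AB by simp
  hence B: "B \<in> carrier_mat n n" using r by auto
  from arg_cong[OF AB, of det] det_mult[OF A B] show "det A \<noteq> 0" by auto
next
  assume "det A \<noteq> 0"
  from det_non_zero_imp_unit[OF A this, of undefined]
  obtain B where B: "B \<in> carrier_mat n n" and AB: "A * B = 1\<^sub>m n" and BA: "B * A = 1\<^sub>m n"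
    unfolding Units_def ring_mat_def by auto
  show "invertible_mat A" unfolding invertible_mat_def inverts_mat_def
    using A B AB BA by (intro conjI exI[of _ B]) auto
qed

lemma GL_det: "GL d = {A :: 'a :: field mat. A \<in> carrier_mat d d \<and> det A \<noteq> 0}"
  unfolding GL_def using invertible_det by blast

lemma CGL_det: "CGL d = {A :: 'a :: field mat. A \<in> carrier_mat d d \<and> det A \<noteq> 0 \<and> det (A + 1\<^sub>m d) \<noteq> 0}"
proof -
  have "eigenvalue A (-1) \<longleftrightarrow> det (A + 1\<^sub>m d) = 0" if "A \<in> carrier_mat d d" for A :: "'a mat"
  proof -
    have "1 \<cdot>\<^sub>m 1\<^sub>m d = (1\<^sub>m d :: 'a mat)" by (rule eq_matI) auto
    thus ?thesis using eigenvalue_det[OF that] that unfolding char_matrix_def by simp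
  qed
  thus ?thesis unfolding CGL_def GL_det by auto
qed

lemma det2: assumes "A \<in> carrier_mat 2 2"
  shows "det A = A $$ (0,0) * A $$ (1,1) - A $$ (0,1) * A $$ (1,0)"
proof -
  have "det A = (\<Sum>j<2. A $$ (0,j) * cofactor A 0 j)" by (rule laplace_expansion_row[OF assms], simp)
  also have "\<dots> = A $$ (0,0) * cofactor A 0 0 + A $$ (0,1) * cofactor A 0 1"
    by (simp add: numeral_2_eq_2 lessThan_Suc)
  also have "cofactor A 0 0 = A $$ (1,1)" unfolding cofactor_def using assms
    by (subst det_single) (auto simp: mat_delete_def)
  also have "cofactor A 0 1 = - A $$ (1,0)" unfolding cofactor_def using assms
    by (subst det_single) (auto simp: mat_delete_def)
  finally show ?thesis by (simp add: algebra_simps)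
qed

lemma det3: assumes A: "A \<in> carrier_mat 3 3"
  shows "det A = A $$ (0,0) * (A $$ (1,1) * A $$ (2,2) - A $$ (1,2) * A $$ (2,1))
     - A $$ (0,1) * (A $$ (1,0) * A $$ (2,2) - A $$ (1,2) * A $$ (2,0))
     + A $$ (0,2) * (A $$ (1,0) * A $$ (2,1) - A $$ (1,1) * A $$ (2,0))"
proof -
  have "det A = (\<Sum>j<3. A $$ (0,j) * cofactor A 0 j)" by (rule laplace_expansion_row[OF A], simp)
  also have "\<dots> = A $$ (0,0) * cofactor A 0 0 + A $$ (0,1) * cofactor A 0 1 + A $$ (0,2) * cofactor A 0 2"
    by (simp add: numeral_3_eq_3 lessThan_Suc numeral_2_eq_2)
  also have "cofactor A 0 0 = A $$ (1,1) * A $$ (2,2) - A $$ (1,2) * A $$ (2,1)" unfolding cofactor_def using A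
    by (subst det2) (auto simp: mat_delete_def numeral_2_eq_2)
  also have "cofactor A 0 1 = - (A $$ (1,0) * A $$ (2,2) - A $$ (1,2) * A $$ (2,0))" unfolding cofactor_def using A
    by (subst det2) (auto simp: mat_delete_def numeral_2_eq_2)
  also have "cofactor A 0 2 = A $$ (1,0) * A $$ (2,1) - A $$ (1,1) * A $$ (2,0)" unfolding cofactor_def using A
    by (subst det2) (auto simp: mat_delete_def numeral_2_eq_2)
  finally show ?thesis by (simp add: algebra_simps)
qed

definition goodm :: "nat \<Rightarrow> 'a::field mat \<Rightarrow> bool" where
  "goodm n N \<longleftrightarrow> (\<exists>E \<in> carrier_mat n n. det E \<noteq> 0 \<and> det (E + 1\<^sub>m n) \<noteq> 0 \<and> det (E + N) \<noteq> 0)"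

lemma good_block:
  fixes N1 :: "'a::field mat"
  assumes N1: "N1 \<in> carrier_mat k k" and N2: "N2 \<in> carrier_mat k m"
    and N3: "N3 \<in> carrier_mat m k" and N4: "N4 \<in> carrier_mat m m"
    and Z: "Z \<in> carrier_mat k m"
    and g1: "goodm k N1" and g2: "goodm m (N4 - N3 * Z)"
  shows "goodm (k + m) (four_block_mat N1 N2 N3 N4)"
proof -
  from g1 obtain E1 where E1: "E1 \<in> carrier_mat k k" and d1: "det E1 \<noteq> 0" "det (E1 + 1\<^sub>m k) \<noteq> 0"
    "det (E1 + N1) \<noteq> 0" unfolding goodm_def by auto
  from g2 obtain E2 where E2: "E2 \<in> carrier_mat m m" and d2: "det E2 \<noteq> 0" "det (E2 + 1\<^sub>m m) \<noteq> 0"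
    "det (E2 + (N4 - N3 * Z)) \<noteq> 0" unfolding goodm_def by auto
  define A where "A = E1 + N1"
  have A: "A \<in> carrier_mat k k" using E1 N1 unfolding A_def by auto
  define X where "X = A * Z - N2"
  have X: "X \<in> carrier_mat k m" using A Z N2 unfolding X_def by auto
  define E where "E = four_block_mat E1 X (0\<^sub>m m k) E2"
  have E: "E \<in> carrier_mat (k+m) (k+m)" unfolding E_def using E1 E2 by auto
  have "det E = det E1 * det E2" unfolding E_def
    by (rule det_four_block_mat_lower_left_zero[OF E1 X refl E2])
  hence dE: "det E \<noteq> 0" using d1 d2 by auto
  have "E + 1\<^sub>m (k+m) = four_block_mat (E1 + 1\<^sub>m k) (X + 0\<^sub>m k m) (0\<^sub>m m k + 0\<^sub>m m k) (E2 + 1\<^sub>m m)"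
    unfolding E_def four_block_one_mat[symmetric]
    by (rule add_four_block_mat, insert E1 E2 X, auto)
  also have "\<dots> = four_block_mat (E1 + 1\<^sub>m k) X (0\<^sub>m m k) (E2 + 1\<^sub>m m)" using X by simp
  finally have "det (E + 1\<^sub>m (k+m)) = det (E1 + 1\<^sub>m k) * det (E2 + 1\<^sub>m m)"
    by (simp add: det_four_block_mat_lower_left_zero[of _ k X m] E1 E2 X)
  hence dE1: "det (E + 1\<^sub>m (k+m)) \<noteq> 0" using d1 d2 by auto
  have "E + four_block_mat N1 N2 N3 N4 = four_block_mat (E1 + N1) (X + N2) (0\<^sub>m m k + N3) (E2 + N4)"
    unfolding E_def by (rule add_four_block_mat, insert E1 E2 X N1 N2 N3 N4, auto)
  also have "X + N2 = A * Z" unfolding X_def using A Z N2 by auto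
  also have "0\<^sub>m m k + N3 = N3" using N3 by simp
  also have "E2 + N4 = N3 * Z + (E2 + (N4 - N3 * Z))" using N3 Z E2 N4 by auto
  also have "four_block_mat (E1 + N1) (A * Z) N3 (N3 * Z + (E2 + (N4 - N3 * Z)))
     = four_block_mat A (0\<^sub>m k m) N3 (1\<^sub>m m) * four_block_mat (1\<^sub>m k) Z (0\<^sub>m m k) (E2 + (N4 - N3 * Z))"
    unfolding A_def[symmetric]
    by (subst mult_four_block_mat[of _ k k _ m _ m], insert A N3 Z E2 N4, auto)
  finally have eq: "E + four_block_mat N1 N2 N3 N4 = four_block_mat A (0\<^sub>m k m) N3 (1\<^sub>m m) * four_block_mat (1\<^sub>m k) Z (0\<^sub>m m k) (E2 + (N4 - N3 * Z))" .
  have "det (E + four_block_mat N1 N2 N3 N4) =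
     det (four_block_mat A (0\<^sub>m k m) N3 (1\<^sub>m m)) * det (four_block_mat (1\<^sub>m k) Z (0\<^sub>m m k) (E2 + (N4 - N3 * Z)))"
    unfolding eq by (rule det_mult[of _ "k+m"], insert A N3 Z E2 N4, auto)
  also have "det (four_block_mat A (0\<^sub>m k m) N3 (1\<^sub>m m)) = det A * det (1\<^sub>m m :: 'a mat)"
    by (rule det_four_block_mat_upper_right_zero[OF A refl N3], simp)
  also have "det (four_block_mat (1\<^sub>m k) Z (0\<^sub>m m k) (E2 + (N4 - N3 * Z))) = det (1\<^sub>m k :: 'a mat) * det (E2 + (N4 - N3 * Z))"
    by (rule det_four_block_mat_lower_left_zero[OF _ Z refl], insert E2 N4 N3 Z, auto)
  finally have "det (E + four_block_mat N1 N2 N3 N4) \<noteq> 0" using d1 d2 unfolding A_def by simp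
  thus ?thesis unfolding goodm_def using E dE dE1 by auto
qed

lemma good_split:
  fixes N :: "'a::field mat"
  assumes N: "N \<in> carrier_mat (k+m) (k+m)"
    and Z: "Z \<in> carrier_mat k m"
    and g1: "goodm k (mat k k (\<lambda>(i,j). N $$ (i,j)))"
    and g2: "goodm m (mat m m (\<lambda>(i,j). N $$ (k+i,k+j)) - mat m k (\<lambda>(i,j). N $$ (k+i,j)) * Z)"
  shows "goodm (k+m) N"
proof -
  have "N = four_block_mat (mat k k (\<lambda>(i,j). N $$ (i,j))) (mat k m (\<lambda>(i,j). N $$ (i,k+j)))
     (mat m k (\<lambda>(i,j). N $$ (k+i,j))) (mat m m (\<lambda>(i,j). N $$ (k+i,k+j)))"
    by (rule eq_matI, insert N, auto)
  also have "goodm (k+m) \<dots>"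
    by (rule good_block[OF _ _ _ _ Z g1 g2], auto)
  finally show ?thesis .
qed

lemma good_conj:
  fixes N :: "'a::field mat"
  assumes N: "N \<in> carrier_mat n n" and P: "P \<in> carrier_mat n n" and Q: "Q \<in> carrier_mat n n"
    and QP: "Q * P = 1\<^sub>m n" and g: "goodm n (P * N * Q)"
  shows "goodm n N"
proof -
  have PQ: "P * Q = 1\<^sub>m n" by (rule mat_mult_left_right_inverse[OF Q P QP])
  from g obtain E where E: "E \<in> carrier_mat n n" and d: "det E \<noteq> 0" "det (E + 1\<^sub>m n) \<noteq> 0"
    "det (E + P * N * Q) \<noteq> 0" unfolding goodm_def by auto
  have dQP: "det Q * det P = 1" using arg_cong[OF QP, of det] det_mult[OF Q P] by simp
  have detc: "det (Q * X * P) = det X" if X: "X \<in> carrier_mat n n" for X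
  proof -
    have "det (Q * X * P) = det Q * det X * det P"
      using det_mult[OF Q X] det_mult[of "Q * X" n P] Q X P by simp
    thus ?thesis using dQP by (simp add: algebra_simps)
  qed
  define E' where "E' = Q * E * P"
  have E': "E' \<in> carrier_mat n n" unfolding E'_def using Q E P by auto
  have "E' + 1\<^sub>m n = Q * (E + 1\<^sub>m n) * P"
  proof -
    have "Q * (E + 1\<^sub>m n) * P = (Q * E + Q * 1\<^sub>m n) * P" using Q E by (simp add: mult_add_distrib_mat)
    also have "\<dots> = Q * E * P + Q * 1\<^sub>m n * P" by (rule add_mult_distrib_mat[of _ n n], insert Q E P, auto)
    also have "Q * 1\<^sub>m n = Q" using Q by simp
    finally show ?thesis unfolding E'_def QP by simp
  qed
  hence d1: "det (E' + 1\<^sub>m n) \<noteq> 0" using detc[of "E + 1\<^sub>m n"] E d by simp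
  have "E' + N = Q * (E + P * N * Q) * P"
  proof -
    have "Q * (E + P * N * Q) * P = (Q * E + Q * (P * N * Q)) * P" using Q E P N by (simp add: mult_add_distrib_mat)
    also have "\<dots> = Q * E * P + Q * (P * N * Q) * P" by (rule add_mult_distrib_mat[of _ n n], insert Q E P N, auto)
    also have "Q * (P * N * Q) * P = (Q * P) * N * (Q * P)"
      using Q P N by (simp add: assoc_mult_mat[of _ n n _ n _ n])
    finally show ?thesis unfolding E'_def QP using N by simp
  qed
  hence d2: "det (E' + N) \<noteq> 0" using detc[of "E + P * N * Q"] E d P N Q by simp
  have "det E' \<noteq> 0" unfolding E'_def using detc[OF E] d by simp
  thus ?thesis unfolding goodm_def using E' d1 d2 by auto
qed

lemma sum_delta_mult: fixes n :: nat shows "j < n \<Longrightarrow> (\<Sum>k<n. (if k = j then 1 else 0) * (f k :: 'a :: semiring_1)) = f j"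
  "j < n \<Longrightarrow> (\<Sum>k<n. f k * (if k = j then 1 else 0)) = f j"
proof -
  assume j: "j < n"
  have "(\<Sum>k<n. (if k = j then 1 else 0) * f k) = (\<Sum>k<n. if k = j then f k else 0)"
    by (rule sum.cong, auto)
  also have "\<dots> = f j" using j by (subst sum.delta) auto
  finally show "(\<Sum>k<n. (if k = j then 1 else 0) * f k) = f j" .
  have "(\<Sum>k<n. f k * (if k = j then 1 else 0)) = (\<Sum>k<n. if k = j then f k else 0)"
    by (rule sum.cong, auto)
  also have "\<dots> = f j" using j by (subst sum.delta) auto
  finally show "(\<Sum>k<n. f k * (if k = j then 1 else 0)) = f j" .
qed

lemma good_perm:
  fixes N :: "'a::field mat"
  assumes N: "N \<in> carrier_mat n n" and s: "\<And>i. i < n \<Longrightarrow> \<sigma> i < n" and inj: "inj_on \<sigma> {..<n}"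
    and g: "goodm n (mat n n (\<lambda>(i,j). N $$ (\<sigma> i, \<sigma> j)))"
  shows "goodm n N"
proof -
  define P :: "'a mat" where "P = mat n n (\<lambda>(i,j). if j = \<sigma> i then 1 else 0)"
  define Q :: "'a mat" where "Q = mat n n (\<lambda>(i,j). if i = \<sigma> j then 1 else 0)"
  have P: "P \<in> carrier_mat n n" and Q: "Q \<in> carrier_mat n n" unfolding P_def Q_def by auto
  have PQ: "P * Q = 1\<^sub>m n"
  proof (rule eq_matI)
    fix a b assume a: "a < dim_row (1\<^sub>m n :: 'a mat)" and b: "b < dim_col (1\<^sub>m n :: 'a mat)"
    have "(P * Q) $$ (a,b) = (\<Sum>k<n. (if k = \<sigma> a then 1 else 0) * (if k = \<sigma> b then 1 else 0))"
      using a b unfolding P_def Q_def by (auto simp: scalar_prod_def atLeast0LessThan intro!: sum.cong)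
    also have "\<dots> = (if \<sigma> a = \<sigma> b then 1 else 0)" using sum_delta_mult(1)[of "\<sigma> a" n "\<lambda>k. if k = \<sigma> b then 1 else 0"] s a by simp
    also have "\<dots> = 1\<^sub>m n $$ (a,b)" using a b inj unfolding inj_on_def by auto
    finally show "(P * Q) $$ (a,b) = 1\<^sub>m n $$ (a,b)" .
  qed (insert P Q, auto)
  have QP: "Q * P = 1\<^sub>m n" by (rule mat_mult_left_right_inverse[OF P Q PQ])
  have PN: "(P * N) $$ (a,b) = N $$ (\<sigma> a, b)" if "a < n" "b < n" for a b
  proof -
    have "(P * N) $$ (a,b) = (\<Sum>k<n. (if k = \<sigma> a then 1 else 0) * N $$ (k,b))"
      using that N unfolding P_def by (auto simp: scalar_prod_def atLeast0LessThan intro!: sum.cong)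
    also have "\<dots> = N $$ (\<sigma> a, b)" using sum_delta_mult(1)[of "\<sigma> a" n] s that by simp
    finally show ?thesis .
  qed
  have "P * N * Q = mat n n (\<lambda>(i,j). N $$ (\<sigma> i, \<sigma> j))"
  proof (rule eq_matI)
    fix a b assume a: "a < dim_row (mat n n (\<lambda>(i,j). N $$ (\<sigma> i, \<sigma> j)))"
      and b: "b < dim_col (mat n n (\<lambda>(i,j). N $$ (\<sigma> i, \<sigma> j)))"
    have "(P * N * Q) $$ (a,b) = (\<Sum>k<n. (P * N) $$ (a,k) * (if k = \<sigma> b then 1 else 0))"
      using a b N P unfolding Q_def by (auto simp: scalar_prod_def atLeast0LessThan intro!: sum.cong)
    also have "\<dots> = (P * N) $$ (a, \<sigma> b)" using sum_delta_mult(2)[of "\<sigma> b" n] s b by simp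
    also have "\<dots> = N $$ (\<sigma> a, \<sigma> b)" using PN a b s by simp
    finally show "(P * N * Q) $$ (a,b) = mat n n (\<lambda>(i,j). N $$ (\<sigma> i, \<sigma> j)) $$ (a,b)" using a b by simp
  qed (insert P Q N, auto)
  with g have "goodm n (P * N * Q)" by simp
  from good_conj[OF N P Q QP this] show ?thesis .
qed

lemma sum_two_delta: fixes n :: nat and f :: "nat \<Rightarrow> 'a :: comm_ring_1"
  assumes "a < n" "j < n"
  shows "(\<Sum>k<n. ((if k = a then 1 else 0) + \<alpha> * (if k = j then 1 else 0)) * f k) = f a + \<alpha> * f j"
    "(\<Sum>k<n. f k * ((if k = a then 1 else 0) + \<alpha> * (if k = j then 1 else 0))) = f a + \<alpha> * f j"
proof -
  have "(\<Sum>k<n. ((if k = a then 1 else 0) + \<alpha> * (if k = j then 1 else 0)) * f k)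
    = (\<Sum>k<n. (if k = a then 1 else 0) * f k) + \<alpha> * (\<Sum>k<n. (if k = j then 1 else 0) * f k)"
    by (simp add: sum.distrib sum_distrib_left algebra_simps)
  thus "(\<Sum>k<n. ((if k = a then 1 else 0) + \<alpha> * (if k = j then 1 else 0)) * f k) = f a + \<alpha> * f j"
    using sum_delta_mult(1)[of a n f] sum_delta_mult(1)[of j n f] assms by simp
  have "(\<Sum>k<n. f k * ((if k = a then 1 else 0) + \<alpha> * (if k = j then 1 else 0)))
    = (\<Sum>k<n. (if k = a then 1 else 0) * f k) + \<alpha> * (\<Sum>k<n. (if k = j then 1 else 0) * f k)"
    by (simp add: sum.distrib sum_distrib_left algebra_simps)
  thus "(\<Sum>k<n. f k * ((if k = a then 1 else 0) + \<alpha> * (if k = j then 1 else 0))) = f a + \<alpha> * f j"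
    using sum_delta_mult(1)[of a n f] sum_delta_mult(1)[of j n f] assms by simp
qed

lemma good_transv:
  fixes N :: "'a::field mat"
  assumes N: "N \<in> carrier_mat n n" and i: "i < n" and j: "j < n" and ij: "i \<noteq> j"
    and g: "goodm n (mat n n (\<lambda>(a,b). N $$ (a,b) + (if a = i then c else 0) * N $$ (j,b)
       + (if b = j then -c else 0) * (N $$ (a,i) + (if a = i then c else 0) * N $$ (j,i))))"
  shows "goodm n N"
proof -
  define \<alpha> where "\<alpha> a = (if a = i then c else 0)" for a
  define \<beta> where "\<beta> b = (if b = j then -c else 0)" for b
  define P :: "'a mat" where "P = mat n n (\<lambda>(a,k). (if k = a then 1 else 0) + \<alpha> a * (if k = j then 1 else 0))"
  define Q :: "'a mat" where "Q = mat n n (\<lambda>(k,b). (if k = b then 1 else 0) + \<beta> b * (if k = i then 1 else 0))"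
  have P: "P \<in> carrier_mat n n" and Q: "Q \<in> carrier_mat n n" unfolding P_def Q_def by auto
  have QP: "Q * P = 1\<^sub>m n"
  proof (rule eq_matI)
    fix a b assume a: "a < dim_row (1\<^sub>m n :: 'a mat)" and b: "b < dim_col (1\<^sub>m n :: 'a mat)"
    have "(Q * P) $$ (a,b) = (\<Sum>k<n. ((if k = a then 1 else 0) + (-\<alpha> a) * (if k = j then 1 else 0)) * P $$ (k,b))"
      using a b P unfolding Q_def \<alpha>_def \<beta>_def using ij
      by (auto simp: scalar_prod_def atLeast0LessThan intro!: sum.cong)
    also have "\<dots> = P $$ (a,b) + (-\<alpha> a) * P $$ (j,b)" by (rule sum_two_delta(1), insert a j, auto)
    also have "\<dots> = 1\<^sub>m n $$ (a,b)" using a b j ij unfolding P_def \<alpha>_def by auto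
    finally show "(Q * P) $$ (a,b) = 1\<^sub>m n $$ (a,b)" .
  qed (insert P Q, auto)
  have PN: "(P * N) $$ (a,b) = N $$ (a,b) + \<alpha> a * N $$ (j,b)" if "a < n" "b < n" for a b
  proof -
    have "(P * N) $$ (a,b) = (\<Sum>k<n. ((if k = a then 1 else 0) + \<alpha> a * (if k = j then 1 else 0)) * N $$ (k,b))"
      using that N unfolding P_def by (auto simp: scalar_prod_def atLeast0LessThan intro!: sum.cong)
    also have "\<dots> = N $$ (a,b) + \<alpha> a * N $$ (j,b)" by (rule sum_two_delta(1), insert that j, auto)
    finally show ?thesis .
  qed
  have "P * N * Q = mat n n (\<lambda>(a,b). N $$ (a,b) + (if a = i then c else 0) * N $$ (j,b)
       + (if b = j then -c else 0) * (N $$ (a,i) + (if a = i then c else 0) * N $$ (j,i)))" (is "_ = ?R")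
  proof (rule eq_matI)
    fix a b assume a': "a < dim_row ?R" and b': "b < dim_col ?R"
    hence a: "a < n" and b: "b < n" by auto
    have "(P * N * Q) $$ (a,b) = (\<Sum>k<n. (P * N) $$ (a,k) * ((if k = b then 1 else 0) + \<beta> b * (if k = i then 1 else 0)))"
      using a b N P unfolding Q_def by (auto simp: scalar_prod_def atLeast0LessThan intro!: sum.cong)
    also have "\<dots> = (P * N) $$ (a,b) + \<beta> b * (P * N) $$ (a,i)" by (rule sum_two_delta(2), insert b i, auto)
    finally show "(P * N * Q) $$ (a,b) = ?R $$ (a,b)"
      using a b i PN unfolding \<alpha>_def \<beta>_def by simp
  qed (insert P Q N, auto)
  with g have "goodm n (P * N * Q)" by simp
  from good_conj[OF N P Q QP this] show ?thesis .
qed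

lemma good0: "N \<in> carrier_mat 0 0 \<Longrightarrow> goodm 0 (N :: 'a::field mat)"
  unfolding goodm_def by (rule bexI[of _ "1\<^sub>m 0"]) auto

lemma good1:
  fixes N :: "'a::field mat"
  assumes "e \<noteq> 0" "e + 1 \<noteq> 0" "e + N $$ (0,0) \<noteq> 0" "N \<in> carrier_mat 1 1"
  shows "goodm 1 N"
  unfolding goodm_def
proof (rule bexI[of _ "mat 1 1 (\<lambda>_. e)"])
  show "mat 1 1 (\<lambda>_. e) \<in> carrier_mat 1 1" by simp
  thus "det (mat 1 1 (\<lambda>_. e)) \<noteq> 0 \<and> det (mat 1 1 (\<lambda>_. e) + 1\<^sub>m 1) \<noteq> 0 \<and> det (mat 1 1 (\<lambda>_. e) + N) \<noteq> 0"
    using assms by (auto simp: det_single)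
qed

lemma good_ge5:
  fixes N :: "'a::field mat"
  assumes two: "(2::'a) \<noteq> 0" and three: "(3::'a) \<noteq> 0" and N: "N \<in> carrier_mat n n"
  shows "goodm n N"
  using N
proof (induction n arbitrary: N)
  case 0 thus ?case by (rule good0)
next
  case (Suc n)
  have N: "N \<in> carrier_mat (1 + n) (1 + n)" using Suc.prems by simp
  have g1: "goodm 1 (mat 1 1 (\<lambda>(i,j). N $$ (i,j)))"
  proof (cases "1 + N $$ (0,0) = 0")
    case True
    have "2 + N $$ (0,0) \<noteq> 0"
    proof
      assume "2 + N $$ (0,0) = 0"
      with True have "(2::'a) = 1" by (metis add_right_cancel)
      thus False using two by (metis add_cancel_right_right one_add_one zero_neq_one)
    qed
    moreover have "(2::'a) + 1 \<noteq> 0" using three by (metis numeral_plus_one semiring_norm(5))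
    ultimately show ?thesis by (intro good1[of 2]) (auto simp: two)
  next
    case False
    thus ?thesis using two by (intro good1[of 1]) (auto simp: one_add_one)
  qed
  have g2: "goodm n (mat n n (\<lambda>(i,j). N $$ (1+i,1+j)) - mat n 1 (\<lambda>(i,j). N $$ (1+i,j)) * 0\<^sub>m 1 n)"
    by (rule Suc.IH, auto)
  from good_split[OF N _ g1 g2] show ?case by simp
qed

lemma numeral_eq_0_char: "CHAR('b::semiring_1) = c \<Longrightarrow> ((numeral k :: 'b) = 0) = (c dvd numeral k)"
  using of_nat_eq_0_iff_char_dvd[of "numeral k", where 'a='b] by simp

lemma F2_3_scalar:
  fixes nx ny nz nu nv nw np nq nr :: "'b::field"
  assumes c: "CHAR('b) = 2" and x: "\<And>x::'b. x = 0 \<or> x = 1"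
  shows "((0 + nx) * ((1 + nv) * (0 + nr) - (1 + nw) * (1 + nq)) - (0 + ny) * ((0 + nu) * (0 + nr) - (1 + nw) * (1 + np)) + (1 + nz) * ((0 + nu) * (1 + nq) - (1 + nv) * (1 + np))) \<noteq> 0 \<or> ((0 + nx) * ((0 + nv) * (0 + nr) - (1 + nw) * (0 + nq)) - (1 + ny) * ((1 + nu) * (0 + nr) - (1 + nw) * (1 + np)) + (0 + nz) * ((1 + nu) * (0 + nq) - (0 + nv) * (1 + np))) \<noteq> 0 \<or> ((0 + nx) * ((1 + nv) * (0 + nr) - (1 + nw) * (1 + nq)) - (1 + ny) * ((1 + nu) * (0 + nr) - (1 + nw) * (0 + np)) + (1 + nz) * ((1 + nu) * (1 + nq) - (1 + nv) * (0 + np))) \<noteq> 0 \<or> ((1 + nx) * ((0 + nv) * (1 + nr) - (0 + nw) * (1 + nq)) - (0 + ny) * ((1 + nu) * (1 + nr) - (0 + nw) * (0 + np)) + (1 + nz) * ((1 + nu) * (1 + nq) - (0 + nv) * (0 + np))) \<noteq> 0 \<or> ((0 + nx) * ((0 + nv) * (1 + nr) - (0 + nw) * (1 + nq)) - (0 + ny) * ((1 + nu) * (1 + nr) - (0 + nw) * (0 + np)) + (1 + nz) * ((1 + nu) * (1 + nq) - (0 + nv) * (0 + np))) \<noteq> 0 \<or> ((0 + nx) * ((1 + nv) * (0 + nr) - (1 + nw) * (1 + nq)) - (1 + ny) * ((1 + nu) * (0 + nr) - (1 + nw) * (1 + np)) + (0 + nz) * ((1 + nu) * (1 + nq) - (1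 + nv) * (1 + np))) \<noteq> 0 \<or> ((0 + nx) * ((0 + nv) * (0 + nr) - (1 + nw) * (1 + nq)) - (1 + ny) * ((0 + nu) * (0 + nr) - (1 + nw) * (1 + np)) + (0 + nz) * ((0 + nu) * (1 + nq) - (0 + nv) * (1 + np))) \<noteq> 0 \<or> ((1 + nx) * ((1 + nv) * (1 + nr) - (0 + nw) * (1 + nq)) - (0 + ny) * ((1 + nu) * (1 + nr) - (0 + nw) * (1 + np)) + (1 + nz) * ((1 + nu) * (1 + nq) - (1 + nv) * (1 + np))) \<noteq> 0 \<or> ((0 + nx) * ((1 + nv) * (1 + nr) - (1 + nw) * (1 + nq)) - (0 + ny) * ((0 + nu) * (1 + nr) - (1 + nw) * (1 + np)) + (1 + nz) * ((0 + nu) * (1 + nq) - (1 + nv) * (1 + np))) \<noteq> 0 \<or> ((0 + nx) * ((0 + nv) * (0 + nr) - (0 + nw) * (1 + nq)) - (0 + ny) * ((1 + nu) * (0 + nr) - (0 + nw) * (1 + np)) + (1 + nz) * ((1 + nu) * (1 + nq) - (0 + nv) * (1 + np))) \<noteq> 0"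
  using x[of nx] x[of ny] x[of nz] x[of nu] x[of nv] x[of nw] x[of np] x[of nq] x[of nr]
  by (elim disjE) (simp_all add: numeral_eq_0_char[OF c])


definition mat3 :: "'a \<Rightarrow> 'a \<Rightarrow> 'a \<Rightarrow> 'a \<Rightarrow> 'a \<Rightarrow> 'a \<Rightarrow> 'a \<Rightarrow> 'a \<Rightarrow> 'a \<Rightarrow> 'a mat" where
  "mat3 a b c d e f g h i = mat 3 3 (\<lambda>(r,s). [[a,b,c],[d,e,f],[g,h,i]] ! r ! s)"

lemma mat3_carrier[simp]: "mat3 a b c d e f g h i \<in> carrier_mat 3 3" unfolding mat3_def by simp

lemma goodI: "E \<in> carrier_mat n n \<Longrightarrow> det E \<noteq> 0 \<Longrightarrow> det (E + 1\<^sub>m n) \<noteq> 0 \<Longrightarrow> det (E + N) \<noteq> 0 \<Longrightarrow> goodm n N"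
  unfolding goodm_def by auto

lemma det3_add: assumes "E \<in> carrier_mat 3 3" "N \<in> carrier_mat 3 3"
  shows "det (E + N) = (E $$ (0,0) + N $$ (0,0)) * ((E $$ (1,1) + N $$ (1,1)) * (E $$ (2,2) + N $$ (2,2)) - (E $$ (1,2) + N $$ (1,2)) * (E $$ (2,1) + N $$ (2,1)))
     - (E $$ (0,1) + N $$ (0,1)) * ((E $$ (1,0) + N $$ (1,0)) * (E $$ (2,2) + N $$ (2,2)) - (E $$ (1,2) + N $$ (1,2)) * (E $$ (2,0) + N $$ (2,0)))
     + (E $$ (0,2) + N $$ (0,2)) * ((E $$ (1,0) + N $$ (1,0)) * (E $$ (2,1) + N $$ (2,1)) - (E $$ (1,1) + N $$ (1,1)) * (E $$ (2,0) + N $$ (2,0)))"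
  using assms by (subst det3, auto)

lemma good3_F2:
  fixes N :: "'b::field mat"
  assumes c: "CHAR('b) = 2" and x: "\<And>x::'b. x = 0 \<or> x = 1" and N: "N \<in> carrier_mat 3 3"
  shows "goodm 3 N"
  using F2_3_scalar[OF c x, where nx = "N $$ (0,0)" and ny = "N $$ (0,1)" and nz = "N $$ (0,2)" and nu = "N $$ (1,0)" and nv = "N $$ (1,1)" and nw = "N $$ (1,2)" and np = "N $$ (2,0)" and nq = "N $$ (2,1)" and nr = "N $$ (2,2)"]
  apply (elim disjE)
    subgoal by (rule goodI[of "mat3 0 0 1 0 1 1 1 1 0"], simp_all add: det3_add[OF _ N] det3_add det3 mat3_def numeral_eq_0_char[OF c])
    subgoal by (rule goodI[of "mat3 0 1 0 1 0 1 1 0 0"], simp_all add: det3_add[OF _ N] det3_add det3 mat3_def numeral_eq_0_char[OF c])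
    subgoal by (rule goodI[of "mat3 0 1 1 1 1 1 0 1 0"], simp_all add: det3_add[OF _ N] det3_add det3 mat3_def numeral_eq_0_char[OF c])
    subgoal by (rule goodI[of "mat3 1 0 1 1 0 0 0 1 1"], simp_all add: det3_add[OF _ N] det3_add det3 mat3_def numeral_eq_0_char[OF c])
    subgoal by (rule goodI[of "mat3 0 0 1 1 0 0 0 1 1"], simp_all add: det3_add[OF _ N] det3_add det3 mat3_def numeral_eq_0_char[OF c])
    subgoal by (rule goodI[of "mat3 0 1 0 1 1 1 1 1 0"], simp_all add: det3_add[OF _ N] det3_add det3 mat3_def numeral_eq_0_char[OF c])
    subgoal by (rule goodI[of "mat3 0 1 0 0 0 1 1 1 0"], simp_all add: det3_add[OF _ N] det3_add det3 mat3_def numeral_eq_0_char[OF c])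
    subgoal by (rule goodI[of "mat3 1 0 1 1 1 0 1 1 1"], simp_all add: det3_add[OF _ N] det3_add det3 mat3_def numeral_eq_0_char[OF c])
    subgoal by (rule goodI[of "mat3 0 0 1 0 1 1 1 1 1"], simp_all add: det3_add[OF _ N] det3_add det3 mat3_def numeral_eq_0_char[OF c])
    subgoal by (rule goodI[of "mat3 0 0 1 1 0 0 1 1 0"], simp_all add: det3_add[OF _ N] det3_add det3 mat3_def numeral_eq_0_char[OF c])
  done


definition mat2 :: "'a \<Rightarrow> 'a \<Rightarrow> 'a \<Rightarrow> 'a \<Rightarrow> 'a mat" where
  "mat2 a b c d = mat 2 2 (\<lambda>(r,s). [[a,b],[c,d]] ! r ! s)"

lemma mat2_carrier[simp]: "mat2 a b c d \<in> carrier_mat 2 2" unfolding mat2_def by simp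

lemma det2_add: assumes "E \<in> carrier_mat 2 2" "N \<in> carrier_mat 2 2"
  shows "det (E + N) = (E $$ (0,0) + N $$ (0,0)) * (E $$ (1,1) + N $$ (1,1)) - (E $$ (0,1) + N $$ (0,1)) * (E $$ (1,0) + N $$ (1,0))"
  using assms by (subst det2, auto)

lemma F2_2_scalar:
  fixes nx ny nz nu :: "'b::field"
  assumes c: "CHAR('b) = 2" and x: "\<And>x::'b. x = 0 \<or> x = 1" and h: "nx \<noteq> nu \<or> (ny = 0 \<and> nz = 0)"
  shows "((0 + nx) * (1 + nu) - (1 + ny) * (1 + nz)) \<noteq> 0 \<or> ((1 + nx) * (0 + nu) - (1 + ny) * (1 + nz)) \<noteq> 0"
  using x[of nx] x[of ny] x[of nz] x[of nu] h
  by (elim disjE) (simp_all add: numeral_eq_0_char[OF c])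

lemma good2_F2:
  fixes N :: "'b::field mat"
  assumes c: "CHAR('b) = 2" and x: "\<And>x::'b. x = 0 \<or> x = 1" and N: "N \<in> carrier_mat 2 2"
    and h: "N $$ (0,0) \<noteq> N $$ (1,1) \<or> (N $$ (0,1) = 0 \<and> N $$ (1,0) = 0)"
  shows "goodm 2 N"
  using F2_2_scalar[OF c x h]
  apply (elim disjE)
    subgoal by (rule goodI[of "mat2 0 1 1 1"], simp_all add: det2_add[OF _ N] det2_add det2 mat2_def numeral_eq_0_char[OF c])
    subgoal by (rule goodI[of "mat2 1 1 1 0"], simp_all add: det2_add[OF _ N] det2_add det2 mat2_def numeral_eq_0_char[OF c])
  done

lemma F3_2_scalar:
  fixes nx ny nz nu :: "'b::field"
  assumes c: "CHAR('b) = 3" and x: "\<And>x::'b. x = 0 \<or> x = 1 \<or> x = 2"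
  shows "((0 + nx) * (1 + nu) - (1 + ny) * (1 + nz)) \<noteq> 0 \<or> ((0 + nx) * (1 + nu) - (2 + ny) * (2 + nz)) \<noteq> 0 \<or> ((1 + nx) * (1 + nu) - (0 + ny) * (0 + nz)) \<noteq> 0 \<or> ((1 + nx) * (0 + nu) - (1 + ny) * (1 + nz)) \<noteq> 0"
  using x[of nx] x[of ny] x[of nz] x[of nu]
  by (elim disjE) (simp_all add: numeral_eq_0_char[OF c])

lemma good2_F3:
  fixes N :: "'b::field mat"
  assumes c: "CHAR('b) = 3" and x: "\<And>x::'b. x = 0 \<or> x = 1 \<or> x = 2" and N: "N \<in> carrier_mat 2 2"
  shows "goodm 2 N"
  using F3_2_scalar[OF c x, where nx = "N $$ (0,0)" and ny = "N $$ (0,1)" and nz = "N $$ (1,0)" and nu = "N $$ (1,1)"]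
  apply (elim disjE)
    subgoal by (rule goodI[of "mat2 0 1 1 1"], simp_all add: det2_add[OF _ N] det2_add det2 mat2_def numeral_eq_0_char[OF c])
    subgoal by (rule goodI[of "mat2 0 2 2 1"], simp_all add: det2_add[OF _ N] det2_add det2 mat2_def numeral_eq_0_char[OF c])
    subgoal by (rule goodI[of "mat2 1 0 0 1"], simp_all add: det2_add[OF _ N] det2_add det2 mat2_def numeral_eq_0_char[OF c])
    subgoal by (rule goodI[of "mat2 1 1 1 0"], simp_all add: det2_add[OF _ N] det2_add det2 mat2_def numeral_eq_0_char[OF c])
  done

lemma good3_F3_negI:
  fixes N :: "'b::field mat"
  assumes c: "CHAR('b) = 3" and N: "N \<in> carrier_mat 3 3" and h: "\<And>i j. i < 3 \<Longrightarrow> j < 3 \<Longrightarrow> N $$ (i,j) = (if i = j then -1 else 0)"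
  shows "goodm 3 N"
  by (rule goodI[of "mat3 0 0 1 1 0 1 0 1 0"], simp_all add: det3_add[OF _ N] det3_add det3 mat3_def numeral_eq_0_char[OF c] h)


lemma good_perm_list:
  fixes N :: "'a::field mat"
  assumes N: "N \<in> carrier_mat n n" and L: "distinct L" "length L = n" "set L \<subseteq> {..<n}"
    and g: "goodm n (mat n n (\<lambda>(i,j). N $$ (L ! i, L ! j)))"
  shows "goodm n N"
proof (rule good_perm[OF N _ _ g])
  show "i < n \<Longrightarrow> L ! i < n" for i using L nth_mem by fastforce
  show "inj_on ((!) L) {..<n}" using L by (auto simp: inj_on_def nth_eq_iff_index_eq)
qed

lemma mult_single_col:
  fixes A :: "'a::comm_ring_1 mat"
  assumes A: "A \<in> carrier_mat m k" and c: "c < k" and a: "a < m" and b: "b < l"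
  shows "(A * mat k l (\<lambda>(i,j). if i = c \<and> j = r then z else 0)) $$ (a,b) = (if b = r then A $$ (a,c) * z else 0)"
proof -
  have "(A * mat k l (\<lambda>(i,j). if i = c \<and> j = r then z else 0)) $$ (a,b) =
    (\<Sum>i<k. A $$ (a,i) * (if i = c \<and> b = r then z else 0))"
    using A a b by (auto simp: scalar_prod_def atLeast0LessThan intro!: sum.cong)
  also have "\<dots> = (\<Sum>i<k. (A $$ (a,i) * (if b = r then z else 0)) * (if i = c then 1 else 0))"
    by (rule sum.cong, auto)
  also have "\<dots> = A $$ (a,c) * (if b = r then z else 0)" by (rule sum_delta_mult(2)[OF c])
  finally show ?thesis by simp
qed

lemma good_flex2_F2:
  fixes N :: "'b::field mat"
  assumes c: "CHAR('b) = 2" and x: "\<And>x::'b. x = 0 \<or> x = 1" and N: "N \<in> carrier_mat (k+2) (k+2)"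
    and g1: "goodm k (mat k k (\<lambda>(i,j). N $$ (i,j)))"
    and h: "N $$ (k,k) \<noteq> N $$ (k+1,k+1) \<or> (N $$ (k,k+1) = 0 \<and> N $$ (k+1,k) = 0) \<or>
      (\<exists>r c'. r < 2 \<and> c' < k \<and> N $$ (k+r, c') \<noteq> 0)"
  shows "goodm (k+2) N"
proof (cases "N $$ (k,k) \<noteq> N $$ (k+1,k+1) \<or> (N $$ (k,k+1) = 0 \<and> N $$ (k+1,k) = 0)")
  case True
  show ?thesis
  proof (rule good_split[OF N _ g1, of "0\<^sub>m k 2"])
    show "goodm 2 (mat 2 2 (\<lambda>(i,j). N $$ (k+i,k+j)) - mat 2 k (\<lambda>(i,j). N $$ (k+i,j)) * 0\<^sub>m k 2)"
      by (rule good2_F2[OF c x], insert True, auto)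
  qed auto
next
  case False
  with h obtain r c' where r: "r < 2" and c': "c' < k" and nz: "N $$ (k+r, c') \<noteq> 0" by auto
  from False have eq: "N $$ (k,k) = N $$ (k+1,k+1)" by auto
  from nz x have one: "N $$ (k+r, c') = 1" by blast
  have two: "(1::'b) + 1 = 0" using numeral_eq_0_char[OF c, of "num.Bit0 num.One"] by simp
  define Z :: "'b mat" where "Z = mat k 2 (\<lambda>(i,j). if i = c' \<and> j = r then 1 else 0)"
  have M: "mat 2 k (\<lambda>(i,j). N $$ (k+i,j)) \<in> carrier_mat 2 k" by simp
  show ?thesis
  proof (rule good_split[OF N _ g1, of Z])
    show "Z \<in> carrier_mat k 2" unfolding Z_def by simp
    let ?R = "mat 2 2 (\<lambda>(i,j). N $$ (k+i,k+j)) - mat 2 k (\<lambda>(i,j). N $$ (k+i,j)) * Z"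
    have R00: "?R $$ (0,0) = N $$ (k,k) - (if 0 = r then N $$ (k, c') else 0)"
      unfolding Z_def using mult_single_col[OF M c', of 0 0 2 r 1] c' by simp
    have R11: "?R $$ (1,1) = N $$ (k+1,k+1) - (if 1 = r then N $$ (k+1, c') else 0)"
      unfolding Z_def using mult_single_col[OF M c', of 1 1 2 r 1] c' by simp
    have "?R $$ (0,0) \<noteq> ?R $$ (1,1)"
    proof (cases "r = 0")
      case True
      thus ?thesis unfolding R00 R11 using one eq two by (auto simp: algebra_simps)
    next
      case False
      with r have "r = 1" by auto
      thus ?thesis unfolding R00 R11 using one eq two by (auto simp: algebra_simps)
    qed
    thus "goodm 2 ?R" by (intro good2_F2[OF c x]) (auto simp: Z_def)
  qed
qed

lemma good_list_22_F2:
  fixes N :: "'b::field mat"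
  assumes c: "CHAR('b) = 2" and x: "\<And>x::'b. x = 0 \<or> x = 1" and N: "N \<in> carrier_mat 4 4"
    and L: "distinct L" "length L = 4" "set L \<subseteq> {..<4}"
    and h1: "N $$ (L!0,L!0) \<noteq> N $$ (L!1,L!1) \<or> (N $$ (L!0,L!1) = 0 \<and> N $$ (L!1,L!0) = 0)"
    and h2: "N $$ (L!2,L!2) \<noteq> N $$ (L!3,L!3) \<or> (N $$ (L!2,L!3) = 0 \<and> N $$ (L!3,L!2) = 0) \<or>
      N $$ (L!2,L!0) \<noteq> 0 \<or> N $$ (L!2,L!1) \<noteq> 0 \<or> N $$ (L!3,L!0) \<noteq> 0 \<or> N $$ (L!3,L!1) \<noteq> 0"
  shows "goodm 4 N"
proof (rule good_perm_list[OF N L])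
  let ?N = "mat 4 4 (\<lambda>(i,j). N $$ (L ! i, L ! j)) :: 'b mat"
  have N': "?N \<in> carrier_mat (2+2) (2+2)" by simp
  have "goodm (2+2) ?N"
  proof (rule good_flex2_F2[OF c x N'])
    show "goodm 2 (mat 2 2 (\<lambda>(i,j). ?N $$ (i,j)))" by (rule good2_F2[OF c x], insert h1, auto)
    have ex: "(\<exists>r c'. r < 2 \<and> c' < 2 \<and> ?N $$ (2+r, c') \<noteq> 0)" if
      "N $$ (L!2,L!0) \<noteq> 0 \<or> N $$ (L!2,L!1) \<noteq> 0 \<or> N $$ (L!3,L!0) \<noteq> 0 \<or> N $$ (L!3,L!1) \<noteq> 0"
      using that
      apply (elim disjE)
      apply (rule exI[of _ 0], rule exI[of _ 0], simp)
      apply (rule exI[of _ 0], rule exI[of _ 1], simp)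
      apply (rule exI[of _ 1], rule exI[of _ 0], simp)
      apply (rule exI[of _ 1], rule exI[of _ 1], simp)
      done
    show "?N $$ (2,2) \<noteq> ?N $$ (2+1,2+1) \<or> (?N $$ (2,2+1) = 0 \<and> ?N $$ (2+1,2) = 0) \<or>
      (\<exists>r c'. r < 2 \<and> c' < 2 \<and> ?N $$ (2+r, c') \<noteq> 0)"
      using ex h2 by auto
  qed
  thus "goodm 4 ?N" by simp
qed

lemma good_list_32_F2:
  fixes N :: "'b::field mat"
  assumes c: "CHAR('b) = 2" and x: "\<And>x::'b. x = 0 \<or> x = 1" and N: "N \<in> carrier_mat 5 5"
    and L: "distinct L" "length L = 5" "set L \<subseteq> {..<5}"
    and h2: "N $$ (L!3,L!3) \<noteq> N $$ (L!4,L!4) \<or> (N $$ (L!3,L!4) = 0 \<and> N $$ (L!4,L!3) = 0) \<or>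
      N $$ (L!4,L!0) \<noteq> 0"
  shows "goodm 5 N"
proof (rule good_perm_list[OF N L])
  let ?N = "mat 5 5 (\<lambda>(i,j). N $$ (L ! i, L ! j)) :: 'b mat"
  have N': "?N \<in> carrier_mat (3+2) (3+2)" by simp
  have "goodm (3+2) ?N"
  proof (rule good_flex2_F2[OF c x N'])
    show "goodm 3 (mat 3 3 (\<lambda>(i,j). ?N $$ (i,j)))" by (rule good3_F2[OF c x], auto)
    have ex: "N $$ (L!4,L!0) \<noteq> 0 \<Longrightarrow> (\<exists>r c'. r < 2 \<and> c' < 3 \<and> ?N $$ (3+r, c') \<noteq> 0)"
      by (rule exI[of _ 1], rule exI[of _ 0], auto)
    show "?N $$ (3,3) \<noteq> ?N $$ (3+1,3+1) \<or> (?N $$ (3,3+1) = 0 \<and> ?N $$ (3+1,3) = 0) \<or>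
      (\<exists>r c'. r < 2 \<and> c' < 3 \<and> ?N $$ (3+r, c') \<noteq> 0)"
      using ex h2 by auto
  qed
  thus "goodm 5 ?N" by simp
qed

lemma good4_two_two:
  fixes N :: "'b::field mat"
  assumes c: "CHAR('b) = 2" and x: "\<And>x::'b. x = 0 \<or> x = 1" and N: "N \<in> carrier_mat 4 4"
    and L: "distinct [a,b,c',d]" "a < 4" "b < 4" "c' < 4" "d < 4"
    and h: "N $$ (a,a) \<noteq> N $$ (b,b)" "N $$ (c',c') \<noteq> N $$ (d,d)"
  shows "goodm 4 N"
  by (rule good_list_22_F2[OF c x N, of "[a,b,c',d]"], insert L h, auto)

lemma good4_three_one:
  fixes N :: "'b::field mat"
  assumes c: "CHAR('b) = 2" and x: "\<And>x::'b. x = 0 \<or> x = 1" and N: "N \<in> carrier_mat 4 4"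
    and L: "distinct [a,b,c',m]" "a < 4" "b < 4" "c' < 4" "m < 4"
    and h: "N $$ (a,a) = N $$ (b,b)" "N $$ (a,a) = N $$ (c',c')" "N $$ (a,a) \<noteq> N $$ (m,m)"
  shows "goodm 4 N"
proof -
  consider (A) "(N $$ (b,c') = 0 \<and> N $$ (c',b) = 0) \<or> N $$ (b,a) \<noteq> 0 \<or> N $$ (b,m) \<noteq> 0 \<or> N $$ (c',a) \<noteq> 0 \<or> N $$ (c',m) \<noteq> 0"
     | (B) "(N $$ (a,c') = 0 \<and> N $$ (c',a) = 0) \<or> N $$ (a,b) \<noteq> 0 \<or> N $$ (a,m) \<noteq> 0 \<or> N $$ (c',b) \<noteq> 0 \<or> N $$ (c',m) \<noteq> 0"
     | (C) "(N $$ (a,b) = 0 \<and> N $$ (b,a) = 0) \<or> N $$ (a,c') \<noteq> 0 \<or> N $$ (a,m) \<noteq> 0 \<or> N $$ (b,c') \<noteq> 0 \<or> N $$ (b,m) \<noteq> 0"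
    by blast
  thus ?thesis
  proof cases
    case A
    show ?thesis by (rule good_list_22_F2[OF c x N, of "[a,m,b,c']"], insert L h A, auto)
  next
    case B
    show ?thesis by (rule good_list_22_F2[OF c x N, of "[b,m,a,c']"], insert L h B, auto)
  next
    case C
    show ?thesis by (rule good_list_22_F2[OF c x N, of "[c',m,a,b]"], insert L h C, auto)
  qed
qed

lemma two_others4: assumes "i < (4::nat)" "j < 4" "i \<noteq> j"
  shows "\<exists>k l. distinct [i,j,k,l] \<and> k < 4 \<and> l < 4"
proof -
  define k where "k = (if 0 \<notin> {i,j} then 0 else if 1 \<notin> {i,j} then 1 else (2::nat))"
  define l where "l = (if 3 \<notin> {i,j} then 3 else if 2 \<notin> {i,j} then 2 else (1::nat))"
  have "distinct [i,j,k,l] \<and> k < 4 \<and> l < 4" using assms unfolding k_def l_def by auto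
  thus ?thesis by blast
qed

lemma good4_alleq:
  fixes N :: "'b::field mat"
  assumes c: "CHAR('b) = 2" and x: "\<And>x::'b. x = 0 \<or> x = 1" and N: "N \<in> carrier_mat 4 4"
    and h: "\<And>a. a < 4 \<Longrightarrow> N $$ (a,a) = N $$ (0,0)"
  shows "goodm 4 N"
proof (cases "\<forall>i<4. \<forall>j<4. i \<noteq> j \<longrightarrow> N $$ (j,i) = 0")
  case True
  show ?thesis by (rule good_list_22_F2[OF c x N, of "[0,1,2,3]"], insert True, auto)
next
  case False
  then obtain i j where i: "i < 4" and j: "j < 4" and ij: "i \<noteq> j" and nz: "N $$ (j,i) \<noteq> 0" by auto
  from nz x have one: "N $$ (j,i) = 1" by blast
  from two_others4[OF i j ij] obtain k l where kl: "distinct [i,j,k,l]" "k < 4" "l < 4" by auto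
  let ?N = "mat 4 4 (\<lambda>(a,b). N $$ (a,b) + (if a = i then 1 else 0) * N $$ (j,b)
       + (if b = j then -1 else 0) * (N $$ (a,i) + (if a = i then 1 else 0) * N $$ (j,i))) :: 'b mat"
  have "goodm 4 ?N"
  proof (rule good4_two_two[OF c x _, of _ i k j l])
    show "?N $$ (i,i) \<noteq> ?N $$ (k,k)" using i kl ij h[of i] h[of k] one by auto
    show "?N $$ (j,j) \<noteq> ?N $$ (l,l)" using j kl ij h[of j] h[of l] one by auto
  qed (insert i j kl, auto)
  thus ?thesis by (rule good_transv[OF N i j ij])
qed

lemma good4_F2:
  fixes N :: "'b::field mat"
  assumes c: "CHAR('b) = 2" and x: "\<And>x::'b. x = 0 \<or> x = 1" and N: "N \<in> carrier_mat 4 4"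
  shows "goodm 4 N"
  using x[of "N $$ (0,0)"] x[of "N $$ (1,1)"] x[of "N $$ (2,2)"] x[of "N $$ (3,3)"]
  apply (elim disjE)
    subgoal by (rule good4_alleq[OF c x N], auto simp: less_Suc_eq numeral_eq_Suc)
    subgoal by (rule good4_three_one[OF c x N, of 0 1 2 3], auto)
    subgoal by (rule good4_three_one[OF c x N, of 0 1 3 2], auto)
    subgoal by (rule good4_two_two[OF c x N, of 0 2 1 3], auto)
    subgoal by (rule good4_three_one[OF c x N, of 0 2 3 1], auto)
    subgoal by (rule good4_two_two[OF c x N, of 0 1 2 3], auto)
    subgoal by (rule good4_two_two[OF c x N, of 0 1 3 2], auto)
    subgoal by (rule good4_three_one[OF c x N, of 1 2 3 0], auto)
    subgoal by (rule good4_three_one[OF c x N, of 1 2 3 0], auto)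
    subgoal by (rule good4_two_two[OF c x N, of 1 0 2 3], auto)
    subgoal by (rule good4_two_two[OF c x N, of 1 0 3 2], auto)
    subgoal by (rule good4_three_one[OF c x N, of 0 2 3 1], auto)
    subgoal by (rule good4_two_two[OF c x N, of 2 0 3 1], auto)
    subgoal by (rule good4_three_one[OF c x N, of 0 1 3 2], auto)
    subgoal by (rule good4_three_one[OF c x N, of 0 1 2 3], auto)
    subgoal by (rule good4_alleq[OF c x N], auto simp: less_Suc_eq numeral_eq_Suc)
  done



lemma less5_cases: "(a::nat) < 5 \<Longrightarrow> a = 0 \<or> a = 1 \<or> a = 2 \<or> a = 3 \<or> a = 4" by auto

lemma good5_diag:
  fixes N :: "'b::field mat"
  assumes c: "CHAR('b) = 2" and x: "\<And>x::'b. x = 0 \<or> x = 1" and N: "N \<in> carrier_mat 5 5"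
    and ab: "a < 5" "b < 5" and h: "N $$ (a,a) \<noteq> N $$ (b,b)"
  shows "goodm 5 N"
proof -
  have ab': "a \<noteq> b" using h by auto
  show ?thesis
  by (rule good_list_32_F2[OF c x N, of "filter (\<lambda>x. x \<noteq> a \<and> x \<noteq> b) [0..<5] @ [a,b]"];
     insert less5_cases[OF ab(1)] less5_cases[OF ab(2)] h ab'; elim disjE; simp add: upt_rec)
qed

lemma good5_off:
  fixes N :: "'b::field mat"
  assumes c: "CHAR('b) = 2" and x: "\<And>x::'b. x = 0 \<or> x = 1" and N: "N \<in> carrier_mat 5 5"
    and ab: "a < 5" "b < 5" "a \<noteq> b" and h: "N $$ (a,b) \<noteq> 0"
  shows "goodm 5 N"
  by (rule good_list_32_F2[OF c x N, of "b # filter (\<lambda>x. x \<noteq> a \<and> x \<noteq> b) [0..<5] @ [a]"];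
     insert less5_cases[OF ab(1)] less5_cases[OF ab(2)] h ab(3); elim disjE; simp add: upt_rec)

lemma good5_F2:
  fixes N :: "'b::field mat"
  assumes c: "CHAR('b) = 2" and x: "\<And>x::'b. x = 0 \<or> x = 1" and N: "N \<in> carrier_mat 5 5"
  shows "goodm 5 N"
proof (cases "\<exists>a<5. \<exists>b<5. N $$ (a,a) \<noteq> N $$ (b,b)")
  case True
  thus ?thesis using good5_diag[OF c x N] by blast
next
  case F1: False
  show ?thesis
  proof (cases "\<exists>a<5. \<exists>b<5. a \<noteq> b \<and> N $$ (a,b) \<noteq> 0")
    case True
    thus ?thesis using good5_off[OF c x N] by blast
  next
    case False
    have z: "\<And>a b. a < 5 \<Longrightarrow> b < 5 \<Longrightarrow> a \<noteq> b \<Longrightarrow> N $$ (a,b) = 0" using False by auto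
    show ?thesis by (rule good_list_32_F2[OF c x N, of "[0,1,2,3,4]"], insert z[of 3 4] z[of 4 3], auto)
  qed
qed


lemma good_F2:
  fixes N :: "'b::field mat"
  assumes c: "CHAR('b) = 2" and x: "\<And>x::'b. x = 0 \<or> x = 1" and N: "N \<in> carrier_mat n n" and n: "3 \<le> n"
  shows "goodm n N"
  using N n
proof (induction n arbitrary: N rule: less_induct)
  case (less n)
  consider "n = 3" | "n = 4" | "n = 5" | "n \<ge> 6" using less.prems by linarith
  thus ?case
  proof cases
    case 1 thus ?thesis using good3_F2[OF c x] less.prems by auto
  next
    case 2 thus ?thesis using good4_F2[OF c x] less.prems by auto
  next
    case 3 thus ?thesis using good5_F2[OF c x] less.prems by auto
  next
    case 4
    have N: "N \<in> carrier_mat (3 + (n-3)) (3 + (n-3))" using less.prems 4 by auto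
    have "goodm (3 + (n-3)) N"
    proof (rule good_split[OF N _ good3_F2[OF c x]])
      show "goodm (n - 3) (mat (n - 3) (n - 3) (\<lambda>(i, j). N $$ (3 + i, 3 + j)) -
        mat (n - 3) 3 (\<lambda>(i, j). N $$ (3 + i, j)) * 0\<^sub>m 3 (n-3))"
        by (rule less.IH, insert 4, auto)
    qed auto
    thus ?thesis using 4 by auto
  qed
qed

lemma good3_F3:
  fixes N :: "'b::field mat"
  assumes c: "CHAR('b) = 3" and x: "\<And>x::'b. x = 0 \<or> x = 1 \<or> x = 2" and N: "N \<in> carrier_mat 3 3"
  shows "goodm 3 N"
proof -
  have two: "(1::'b) + 1 \<noteq> 0" using numeral_eq_0_char[OF c, of "num.Bit0 num.One"] by simp
  show ?thesis
  proof (cases "\<exists>a<3. N $$ (a,a) \<noteq> -1")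
    case True
    then obtain a where a: "a < 3" and na: "N $$ (a,a) \<noteq> -1" by auto
    define L where "L = a # filter (\<lambda>x. x \<noteq> a) [0..<3]"
    have L: "distinct L" "length L = 3" "set L \<subseteq> {..<3}" "L ! 0 = a"
      using a unfolding L_def by (auto simp: upt_rec less_Suc_eq numeral_eq_Suc)
    let ?N = "mat 3 3 (\<lambda>(i,j). N $$ (L ! i, L ! j)) :: 'b mat"
    have e3: "(1::nat) + 2 = 3" by simp
    have N': "?N \<in> carrier_mat (1+2) (1+2)" unfolding e3 by (rule mat_carrier)
    have "goodm (1+2) ?N"
    proof (rule good_split[OF N' _ _ good2_F3[OF c x]])
      show "goodm 1 (mat 1 1 (\<lambda>(i,j). ?N $$ (i,j)))"
      proof (rule good1[of 1])
        have "1 + N $$ (a,a) \<noteq> 0" using na by (metis add.commute add_eq_0_iff)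
        thus "1 + mat 1 1 (\<lambda>(i,j). ?N $$ (i,j)) $$ (0,0) \<noteq> 0" using L by simp
      qed (insert two, auto)
    qed (auto simp: numeral_3_eq_3)
    hence "goodm 3 ?N" unfolding e3 .
    thus ?thesis using good_perm_list[OF N L(1-3)] by simp
  next
    case False
    hence diag: "\<And>a. a < 3 \<Longrightarrow> N $$ (a,a) = -1" by auto
    show ?thesis
    proof (cases "\<exists>a<3. \<exists>b<3. a \<noteq> b \<and> N $$ (a,b) \<noteq> 0")
      case True
      then obtain a b where ab: "a < 3" "b < 3" "a \<noteq> b" and nz: "N $$ (a,b) \<noteq> 0" by auto
      define L where "L = b # filter (\<lambda>x. x \<noteq> a \<and> x \<noteq> b) [0..<3] @ [a]"
      have L: "distinct L" "length L = 3" "set L \<subseteq> {..<3}" "L ! 0 = b" "L ! 2 = a"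
        using ab unfolding L_def by (auto simp: upt_rec less_Suc_eq numeral_eq_Suc)
      let ?N = "mat 3 3 (\<lambda>(i,j). N $$ (L ! i, L ! j)) :: 'b mat"
      have N': "?N \<in> carrier_mat (2+1) (2+1)" by simp
      define z where "z = N $$ (a,a) / N $$ (a,b)"
      define Z :: "'b mat" where "Z = mat 2 1 (\<lambda>(i,j). if i = 0 \<and> j = 0 then z else 0)"
      have M: "mat 1 2 (\<lambda>(i,j). ?N $$ (2+i,j)) \<in> carrier_mat 1 2" by simp
      have "goodm (2+1) ?N"
      proof (rule good_split[OF N' _ good2_F3[OF c x], of Z])
        show "Z \<in> carrier_mat 2 1" unfolding Z_def by simp
        let ?R = "mat 1 1 (\<lambda>(i,j). ?N $$ (2+i,2+j)) - mat 1 2 (\<lambda>(i,j). ?N $$ (2+i,j)) * Z"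
        have "?R $$ (0,0) = N $$ (a,a) - N $$ (a,b) * z"
          unfolding Z_def using mult_single_col[OF M, of 0 0 0 1 0 z] L by (simp add: numeral_2_eq_2)
        also have "\<dots> = 0" unfolding z_def using nz by simp
        finally have R: "?R $$ (0,0) = 0" .
        show "goodm 1 ?R" by (rule good1[of 1], insert two R, auto simp: Z_def)
      qed auto
      thus ?thesis using good_perm_list[OF N L(1-3)] by simp
    next
      case False
      show ?thesis by (rule good3_F3_negI[OF c N], insert False diag, auto)
    qed
  qed
qed

lemma good_F3:
  fixes N :: "'b::field mat"
  assumes c: "CHAR('b) = 3" and x: "\<And>x::'b. x = 0 \<or> x = 1 \<or> x = 2" and N: "N \<in> carrier_mat n n" and n: "2 \<le> n"
  shows "goodm n N"
  using N n
proof (induction n arbitrary: N rule: less_induct)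
  case (less n)
  consider "n = 2" | "n = 3" | "n \<ge> 4" using less.prems by linarith
  thus ?case
  proof cases
    case 1 thus ?thesis using good2_F3[OF c x] less.prems by auto
  next
    case 2 thus ?thesis using good3_F3[OF c x] less.prems by auto
  next
    case 3
    have N: "N \<in> carrier_mat (2 + (n-2)) (2 + (n-2))" using less.prems 3 by auto
    have "goodm (2 + (n-2)) N"
    proof (rule good_split[OF N _ good2_F3[OF c x]])
      show "goodm (n - 2) (mat (n - 2) (n - 2) (\<lambda>(i, j). N $$ (2 + i, 2 + j)) -
        mat (n - 2) 2 (\<lambda>(i, j). N $$ (2 + i, j)) * 0\<^sub>m 2 (n-2))"
        by (rule less.IH, insert 3, auto)
    qed auto
    moreover have "2 + (n-2) = n" using 3 by simp
    ultimately show ?thesis by metis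
  qed
qed

lemma mod_ring_elems2: assumes "CARD('a::prime_card) = 2" shows "(x::'a mod_ring) = 0 \<or> x = 1"
proof -
  obtain i where "i < CARD('a)" "x = of_nat i" using surj_of_nat_mod_ring by blast
  thus ?thesis using assms by (auto simp: less_Suc_eq numeral_eq_Suc)
qed

lemma mod_ring_elems3: assumes "CARD('a::prime_card) = 3" shows "(x::'a mod_ring) = 0 \<or> x = 1 \<or> x = 2"
proof -
  obtain i where "i < CARD('a)" "x = of_nat i" using surj_of_nat_mod_ring by blast
  thus ?thesis using assms by (auto simp: less_Suc_eq numeral_eq_Suc)
qed

lemma good_all:
  fixes M :: "'a::prime_card mod_ring mat"
  assumes d: "d \<ge> 1" and ne: "(d, CARD('a)) \<notin> {(1,2),(1,3),(2,2)}" and M: "M \<in> carrier_mat d d"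
  shows "goodm d M"
proof -
  have c: "CHAR('a mod_ring) = CARD('a)" by simp
  have p: "prime CARD('a)" by (rule prime_card)
  consider "CARD('a) = 2" | "CARD('a) = 3" | "CARD('a) \<noteq> 2 \<and> CARD('a) \<noteq> 3" by blast
  thus ?thesis
  proof cases
    case 1
    have "d \<ge> 3" using d ne 1 by auto
    thus ?thesis using good_F2[OF _ mod_ring_elems2 M] 1 c by auto
  next
    case 2
    have "d \<ge> 2" using d ne 2 by auto
    thus ?thesis using good_F3[OF _ mod_ring_elems3 M] 2 c by auto
  next
    case 3
    have ge: "CARD('a) > 3"
    proof -
      have "CARD('a) \<ge> 2" using p prime_ge_2_nat by blast
      moreover have "CARD('a) \<noteq> 4"
      proof
        assume "CARD('a) = 4"
        hence "prime ((2::nat) * 2)" using p by simp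
        thus False using prime_product[of "2::nat" 2] by simp
      qed
      ultimately show ?thesis using 3 by linarith
    qed
    have "(2::'a mod_ring) \<noteq> 0" unfolding numeral_eq_0_char[OF c] using ge by (auto dest: dvd_imp_le)
    moreover have "(3::'a mod_ring) \<noteq> 0" unfolding numeral_eq_0_char[OF c] using ge by (auto dest: dvd_imp_le)
    ultimately show ?thesis using good_ge5[OF _ _ M] by auto
  qed
qed

lemma inverse_exists:
  fixes E :: "'a::field mat"
  assumes E: "E \<in> carrier_mat n n" and d: "det E \<noteq> 0"
  shows "\<exists>F \<in> carrier_mat n n. E * F = 1\<^sub>m n \<and> F * E = 1\<^sub>m n"
  using det_non_zero_imp_unit[OF E d, of undefined] unfolding Units_def ring_mat_def by auto

lemma good_factor:
  fixes M :: "'a::field mat"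
  assumes g: "goodm d M" and M: "M \<in> GL d"
  shows "\<exists>A B. A \<in> CGL d \<and> B \<in> CGL d \<and> M = A * B"
proof -
  from M have Mc: "M \<in> carrier_mat d d" and dM: "det M \<noteq> 0" unfolding GL_det by auto
  from g obtain E where E: "E \<in> carrier_mat d d" and dE: "det E \<noteq> 0" "det (E + 1\<^sub>m d) \<noteq> 0"
    "det (E + M) \<noteq> 0" unfolding goodm_def by auto
  from inverse_exists[OF E dE(1)] obtain F where F: "F \<in> carrier_mat d d" and EF: "E * F = 1\<^sub>m d"
    and FE: "F * E = 1\<^sub>m d" by auto
  have dF: "det F \<noteq> 0" using arg_cong[OF EF, of det] det_mult[OF E F] by auto
  define A where "A = M * F"
  have A: "A \<in> carrier_mat d d" unfolding A_def using Mc F by auto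
  have "A * E = M * (F * E)" unfolding A_def using Mc F E by (simp add: assoc_mult_mat)
  hence AE: "A * E = M" using FE Mc by simp
  have "det A \<noteq> 0" unfolding A_def using det_mult[OF Mc F] dM dF by auto
  moreover have "det (A + 1\<^sub>m d) \<noteq> 0"
  proof -
    have "A + 1\<^sub>m d = (M + E) * F"
      unfolding A_def using Mc E F EF by (simp add: add_mult_distrib_mat)
    hence "det (A + 1\<^sub>m d) = det (M + E) * det F" using det_mult[of "M + E" d F] Mc E F by simp
    also have "M + E = E + M" using Mc E by (simp add: comm_add_mat)
    finally show ?thesis using dE dF by simp
  qed
  ultimately have "A \<in> CGL d" unfolding CGL_det using A by auto
  moreover have "E \<in> CGL d" unfolding CGL_det using E dE by auto
  ultimately show ?thesis using AE by metis
qed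

lemma CGL_pow_0: "CGL_pow d 0 = {1\<^sub>m d}"
  unfolding CGL_pow_def by auto

lemma CGL_pow_Suc: "CGL_pow d (Suc l) = {A * X | A X. A \<in> CGL d \<and> X \<in> CGL_pow d l}"
proof (rule Set.set_eqI, rule iffI)
  fix M assume "M \<in> CGL_pow d (Suc l)"
  then obtain As where As: "length As = Suc l" "set As \<subseteq> CGL d" and M: "M = foldr (*) As (1\<^sub>m d)"
    unfolding CGL_pow_def by auto
  then obtain A Bs where "As = A # Bs" by (cases As) auto
  thus "M \<in> {A * X | A X. A \<in> CGL d \<and> X \<in> CGL_pow d l}" using As M unfolding CGL_pow_def by auto
next
  fix M assume "M \<in> {A * X | A X. A \<in> CGL d \<and> X \<in> CGL_pow d l}"
  then obtain A Bs where "A \<in> CGL d" "length Bs = l" "set Bs \<subseteq> CGL d" "M = A * foldr (*) Bs (1\<^sub>m d)"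
    unfolding CGL_pow_def by auto
  thus "M \<in> CGL_pow d (Suc l)" unfolding CGL_pow_def by (intro CollectI exI[of _ "A # Bs"]) auto
qed

lemma CGL_sub_GL: "CGL d \<subseteq> GL d" unfolding CGL_def by auto

lemma GL_mult: "A \<in> GL d \<Longrightarrow> B \<in> GL d \<Longrightarrow> A * B \<in> GL (d :: nat) \<and> (A * B :: 'a :: field mat) \<in> carrier_mat d d"
  unfolding GL_det using det_mult[of A d B] by auto

lemma CGL_pow_sub: "CGL_pow d l \<subseteq> (GL d :: 'a::field mat set)"
proof (induction l)
  case 0 show ?case unfolding CGL_pow_0 GL_det by auto
next
  case (Suc l) thus ?case unfolding CGL_pow_Suc using CGL_sub_GL GL_mult by blast
qed

lemma CGL_pow_1: "CGL_pow d 1 = (CGL d :: 'a::field mat set)"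
proof -
  have "A * 1\<^sub>m d = A" if "A \<in> CGL d" for A :: "'a mat" using that unfolding CGL_det by auto
  thus ?thesis unfolding One_nat_def CGL_pow_Suc CGL_pow_0 by force
qed

lemma CGL_pow_2: "CGL_pow d 2 = {A * X | A X. A \<in> CGL d \<and> X \<in> (CGL d :: 'a::field mat set)}"
  using CGL_pow_Suc[of d 1, where 'a='a] CGL_pow_1[of d, where 'a='a] by (simp add: numeral_2_eq_2)

lemma CGL_pow_GL:
  fixes dummy :: "'a::field"
  assumes g: "\<And>M::'a mat. M \<in> carrier_mat d d \<Longrightarrow> goodm d M" and l: "l \<ge> 2"
  shows "CGL_pow d l = (GL d :: 'a mat set)"
  using l
proof (induction l rule: dec_induct)
  case base
  show ?case
  proof (intro equalityI CGL_pow_sub subsetI)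
    fix M :: "'a mat" assume M: "M \<in> GL d"
    from good_factor[OF g M] M obtain A B where AB: "A \<in> CGL d" "B \<in> CGL d" "M = A * B"
      unfolding GL_det by auto
    thus "M \<in> CGL_pow d 2" unfolding CGL_pow_2 using AB by auto
  qed
next
  case (step l)
  show ?case
  proof (intro equalityI CGL_pow_sub subsetI)
    fix M :: "'a mat" assume M: "M \<in> GL d"
    have I: "(1\<^sub>m d :: 'a mat) \<in> GL d" unfolding GL_det by auto
    from good_factor[OF g I] I obtain C B :: "'a mat" where CB: "C \<in> CGL d" "B \<in> CGL d" "1\<^sub>m d = C * B"
      unfolding GL_det by auto
    have C: "C \<in> carrier_mat d d" and B: "B \<in> carrier_mat d d" using CB unfolding CGL_det by auto
    have BC: "B * C = 1\<^sub>m d" using mat_mult_left_right_inverse[OF C B CB(3)[symmetric]] .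
    have BM: "B * M \<in> GL d" using GL_mult[OF _ M, of B] CB CGL_sub_GL by auto
    have Mc: "M \<in> carrier_mat d d" using M unfolding GL_det by auto
    have "C * (B * M) = (C * B) * M" using C B Mc by (simp add: assoc_mult_mat[of C d d B d M d])
    also have "\<dots> = M" unfolding CB(3)[symmetric] using Mc by simp
    finally have "C * (B * M) = M" .
    moreover have "B * M \<in> CGL_pow d l" using BM step.IH by simp
    ultimately show "M \<in> CGL_pow d (Suc l)" unfolding CGL_pow_Suc
      apply (intro CollectI)
      apply (rule exI[of _ C], rule exI[of _ "B * M"])
      using CB(1) by auto
  qed
qed




lemma funpow_period: "(\<sigma> ^^ k) x = x \<Longrightarrow> (\<sigma> ^^ (k * m)) x = x"
proof (induction m)
  case (Suc m)
  have "(\<sigma> ^^ (k * Suc m)) x = (\<sigma> ^^ k) ((\<sigma> ^^ (k * m)) x)"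
    by (simp add: funpow_add)
  thus ?case using Suc by simp
qed simp

lemma orbit_period:
  assumes "(\<sigma> ^^ k) x = x" "0 < k"
  shows "cyc_orbit \<sigma> x = (\<lambda>i. (\<sigma> ^^ i) x) ` {..<k}"
proof (intro equalityI subsetI)
  fix y assume "y \<in> cyc_orbit \<sigma> x"
  then obtain n where y: "y = (\<sigma> ^^ n) x" unfolding cyc_orbit_def by auto
  have "n = n mod k + k * (n div k)" by simp
  hence "(\<sigma> ^^ n) x = (\<sigma> ^^ (n mod k)) ((\<sigma> ^^ (k * (n div k))) x)"
    by (metis funpow_add o_apply)
  also have "\<dots> = (\<sigma> ^^ (n mod k)) x" using funpow_period[OF assms(1)] by simp
  finally show "y \<in> (\<lambda>i. (\<sigma> ^^ i) x) ` {..<k}" using y assms(2) by auto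
qed (auto simp: cyc_orbit_def)

lemma ct_orbits: "cycle_type \<Omega> \<sigma> j = card {C \<in> cyc_orbit \<sigma> ` \<Omega>. card C = j}"
  unfolding cycle_type_def by (rule arg_cong[of _ _ card]) auto

lemma ct_id:
  assumes "finite \<Omega>" "\<And>x. x \<in> \<Omega> \<Longrightarrow> \<sigma> x = x"
  shows "cycle_type \<Omega> \<sigma> = (\<lambda>j. if j = 1 then card \<Omega> else 0)"
proof
  fix j
  have orb: "cyc_orbit \<sigma> x = {x}" if "x \<in> \<Omega>" for x
    using orbit_period[where \<sigma>=\<sigma> and k=1 and x=x] assms(2)[OF that] by auto
  have "cyc_orbit \<sigma> ` \<Omega> = (\<lambda>x. {x}) ` \<Omega>" using orb by auto
  hence "{C \<in> cyc_orbit \<sigma> ` \<Omega>. card C = j} = (if j = 1 then (\<lambda>x. {x}) ` \<Omega> else {})" by auto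
  moreover have "card ((\<lambda>x. {x}) ` \<Omega>) = card \<Omega>" by (rule card_image) (auto simp: inj_on_def)
  ultimately show "cycle_type \<Omega> \<sigma> j = (if j = 1 then card \<Omega> else 0)" unfolding ct_orbits by auto
qed

lemma ct_single:
  assumes "\<Omega> \<noteq> {}" "\<And>x. x \<in> \<Omega> \<Longrightarrow> cyc_orbit \<sigma> x = \<Omega>"
  shows "cycle_type \<Omega> \<sigma> = (\<lambda>j. if j = card \<Omega> then 1 else 0)"
proof
  fix j
  have img: "cyc_orbit \<sigma> ` \<Omega> = {\<Omega>}"
  proof
    show "cyc_orbit \<sigma> ` \<Omega> \<subseteq> {\<Omega>}" using assms(2) by blast
    from assms(1) obtain x where "x \<in> \<Omega>" by blast
    thus "{\<Omega>} \<subseteq> cyc_orbit \<sigma> ` \<Omega>" using assms(2) by (metis empty_subsetI image_eqI insert_subset)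
  qed
  have "{C \<in> {\<Omega>}. card C = j} = (if j = card \<Omega> then {\<Omega>} else {})" by auto
  thus "cycle_type \<Omega> \<sigma> j = (if j = card \<Omega> then 1 else 0)" unfolding ct_orbits img by simp
qed

lemma ct_invol:
  assumes fin: "finite \<Omega>" and h: "\<And>x. x \<in> \<Omega> \<Longrightarrow> \<sigma> x \<in> \<Omega> \<and> \<sigma> (\<sigma> x) = x \<and> \<sigma> x \<noteq> x"
  shows "cycle_type \<Omega> \<sigma> = (\<lambda>j. if j = 2 then card \<Omega> div 2 else 0)"
proof
  fix j
  have orb: "cyc_orbit \<sigma> x = {x, \<sigma> x}" if "x \<in> \<Omega>" for x
    using orbit_period[where \<sigma>=\<sigma> and k=2 and x=x] h[OF that] by (auto simp: numeral_2_eq_2 lessThan_Suc)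
  define Os where "Os = cyc_orbit \<sigma> ` \<Omega>"
  have Os: "Os = (\<lambda>x. {x, \<sigma> x}) ` \<Omega>" unfolding Os_def using orb by auto
  have c2: "card C = 2" if "C \<in> Os" for C
  proof -
    from that obtain x where x: "x \<in> \<Omega>" "C = {x, \<sigma> x}" unfolding Os by auto
    have "x \<noteq> \<sigma> x" using h[OF x(1)] by metis
    thus ?thesis using x(2) by simp
  qed
  have "2 * card Os = card (\<Union> Os)"
  proof (rule card_partition)
    show "finite Os" unfolding Os using fin by auto
    show "finite (\<Union> Os)" unfolding Os using fin h by auto
    show "card c = 2" if "c \<in> Os" for c using c2 that .
    have sw: "{x, \<sigma> x} = {z, \<sigma> z}" if "x \<in> \<Omega>" "z \<in> {x, \<sigma> x}" for x z
      using that h[OF that(1)] by auto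
    show "c1 \<inter> c2 = {}" if "c1 \<in> Os" "c2 \<in> Os" "c1 \<noteq> c2" for c1 c2
    proof (rule ccontr)
      assume "c1 \<inter> c2 \<noteq> {}"
      then obtain z where z: "z \<in> c1" "z \<in> c2" by auto
      from that obtain x y where x: "x \<in> \<Omega>" "c1 = {x, \<sigma> x}" and y: "y \<in> \<Omega>" "c2 = {y, \<sigma> y}"
        unfolding Os by auto
      have "c1 = {z, \<sigma> z}" using sw[OF x(1)] z x by simp
      moreover have "c2 = {z, \<sigma> z}" using sw[OF y(1)] z y by simp
      ultimately show False using that(3) by simp
    qed
  qed
  moreover have "\<Union> Os = \<Omega>" unfolding Os using h by auto
  ultimately have cO: "card Os = card \<Omega> div 2" by simp
  have "{C \<in> Os. card C = j} = (if j = 2 then Os else {})" using c2 by auto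
  thus "cycle_type \<Omega> \<sigma> j = (if j = 2 then card \<Omega> div 2 else 0)" unfolding ct_orbits Os_def[symmetric]
    using cO by auto
qed

lemma ct_fix3:
  assumes fin: "finite \<Omega>" and c4: "card \<Omega> = 4" and x0: "x0 \<in> \<Omega>" "\<sigma> x0 = x0"
    and h: "\<And>y. y \<in> \<Omega> \<Longrightarrow> \<sigma> y \<in> \<Omega> \<and> \<sigma> (\<sigma> (\<sigma> y)) = y"
    and nf: "\<And>y. y \<in> \<Omega> \<Longrightarrow> y \<noteq> x0 \<Longrightarrow> \<sigma> y \<noteq> y"
  shows "cycle_type \<Omega> \<sigma> = x1x3"
proof
  fix j
  define R where "R = \<Omega> - {x0}"
  have cR: "card R = 3" unfolding R_def using c4 x0 fin by simp
  have o0: "cyc_orbit \<sigma> x0 = {x0}"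
    using orbit_period[where \<sigma>=\<sigma> and k=1 and x=x0] x0 by auto
  have oy: "cyc_orbit \<sigma> y = R" if y: "y \<in> R" for y
  proof -
    have yO: "y \<in> \<Omega>" "y \<noteq> x0" using y unfolding R_def by auto
    have s1: "\<sigma> y \<in> \<Omega>" and s3: "\<sigma> (\<sigma> (\<sigma> y)) = y" using h[OF yO(1)] by auto
    have s2: "\<sigma> (\<sigma> y) \<in> \<Omega>" using h[OF s1] by auto
    have a1: "\<sigma> y \<noteq> x0" using s3 x0 yO by auto
    have a2: "\<sigma> (\<sigma> y) \<noteq> x0" using s3 x0 yO by auto
    have d1: "\<sigma> y \<noteq> y" using nf[OF yO] .
    have d2: "\<sigma> (\<sigma> y) \<noteq> \<sigma> y" using nf[OF s1 a1] .
    have d3: "\<sigma> (\<sigma> y) \<noteq> y" using s3 d1 by metis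
    have per: "(\<sigma> ^^ 3) y = y" using s3 by (simp add: numeral_3_eq_3)
    have "cyc_orbit \<sigma> y = (\<lambda>i. (\<sigma> ^^ i) y) ` {..<3}" by (rule orbit_period[OF per]) simp
    also have "\<dots> = {y, \<sigma> y, \<sigma> (\<sigma> y)}" by (auto simp: numeral_3_eq_3 lessThan_Suc)
    finally have "cyc_orbit \<sigma> y = {y, \<sigma> y, \<sigma> (\<sigma> y)}" .
    moreover have "{y, \<sigma> y, \<sigma> (\<sigma> y)} = R"
    proof (rule card_subset_eq)
      show "finite R" unfolding R_def using fin by simp
      show "{y, \<sigma> y, \<sigma> (\<sigma> y)} \<subseteq> R" unfolding R_def using yO s1 s2 a1 a2 by auto
      show "card {y, \<sigma> y, \<sigma> (\<sigma> y)} = card R" using cR d1 d2 d3 by auto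
    qed
    ultimately show ?thesis by simp
  qed
  have "R \<noteq> {}" using cR by auto
  then obtain y0 where y0: "y0 \<in> R" by auto
  have img: "cyc_orbit \<sigma> ` \<Omega> = {{x0}, R}"
  proof
    show "cyc_orbit \<sigma> ` \<Omega> \<subseteq> {{x0}, R}" using o0 oy unfolding R_def by blast
    show "{{x0}, R} \<subseteq> cyc_orbit \<sigma> ` \<Omega>" using o0 oy[OF y0] y0 x0 unfolding R_def by blast
  qed
  have ne: "{x0} \<noteq> R" using cR by auto
  have "{C \<in> {{x0}, R}. card C = j} = (if j = 1 then {{x0}} else {}) \<union> (if j = 3 then {R} else {})"
    using cR by auto
  thus "cycle_type \<Omega> \<sigma> j = x1x3 j" unfolding ct_orbits img x1x3_def using ne by auto
qed

definition vec1 :: "'a \<Rightarrow> 'a vec" where "vec1 a = vec 1 (\<lambda>_. a)"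
definition vec2 :: "'a \<Rightarrow> 'a \<Rightarrow> 'a vec" where "vec2 a b = vec 2 (\<lambda>i. if i = 0 then a else b)"

lemma vec1_carrier[simp]: "vec1 a \<in> carrier_vec 1" unfolding vec1_def by simp
lemma vec2_carrier[simp]: "vec2 a b \<in> carrier_vec 2" unfolding vec2_def by simp
lemma vec1_index[simp]: "vec1 a $ 0 = a" unfolding vec1_def by simp
lemma vec2_index[simp]: "vec2 a b $ 0 = a" "vec2 a b $ 1 = b" "vec2 a b $ Suc 0 = b" unfolding vec2_def by simp_all
lemma vec1_carrier'[simp]: "vec1 a \<in> carrier_vec (Suc 0)" unfolding vec1_def by simp
lemma vec1_eq[simp]: "vec1 a = vec1 b \<longleftrightarrow> a = b"
proof
  assume "vec1 a = vec1 b"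
  hence "vec1 a $ 0 = vec1 b $ 0" by simp
  thus "a = b" by simp
qed simp
lemma vec2_eq[simp]: "vec2 a b = vec2 c d \<longleftrightarrow> a = c \<and> b = d"
proof
  assume "vec2 a b = vec2 c d"
  hence "vec2 a b $ 0 = vec2 c d $ 0" "vec2 a b $ 1 = vec2 c d $ 1" by simp_all
  thus "a = c \<and> b = d" by simp
qed simp

lemma vec1_cases: "x \<in> carrier_vec 1 \<Longrightarrow> x = vec1 (x $ 0)"
  unfolding vec1_def by (rule eq_vecI) auto
lemma vec2_cases: "x \<in> carrier_vec 2 \<Longrightarrow> x = vec2 (x $ 0) (x $ 1)"
  unfolding vec2_def by (rule eq_vecI) (auto simp: less_2_cases_iff)

lemma carrier_vec1: "carrier_vec 1 = range vec1"
  using vec1_cases by (auto intro!: image_eqI)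
lemma carrier_vec2: "carrier_vec 2 = (\<lambda>(a,b). vec2 a b) ` UNIV"
  using vec2_cases by (auto intro!: image_eqI[of _ _ "(x $ 0, x $ 1)" for x])

lemma card_vec1: "card (carrier_vec 1 :: 'a::finite vec set) = CARD('a)"
  unfolding carrier_vec1 by (rule card_image) (auto simp: inj_on_def)
lemma card_vec2: "card (carrier_vec 2 :: 'a::finite vec set) = CARD('a) * CARD('a)"
proof -
  have "card ((\<lambda>(a,b). vec2 a b) ` (UNIV :: ('a \<times> 'a) set)) = card (UNIV :: ('a \<times> 'a) set)"
    by (rule card_image) (auto simp: inj_on_def)
  thus ?thesis unfolding carrier_vec2 by (simp add: UNIV_Times_UNIV[symmetric] card_cartesian_product del: UNIV_Times_UNIV)
qed
lemma finite_vec2: "finite (carrier_vec 2 :: 'a::finite vec set)" unfolding carrier_vec2 by simp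
lemma finite_vec1: "finite (carrier_vec 1 :: 'a::finite vec set)" unfolding carrier_vec1 by simp

lemma aff_one: assumes "x \<in> carrier_vec d" "v \<in> carrier_vec d"
  shows "aff d (1\<^sub>m d) v x = x + (v :: 'a::comm_ring_1 vec)"
proof (rule eq_vecI)
  fix j assume "j < dim_vec (x + v)"
  hence j: "j < d" using assms by simp
  have "(\<Sum>i<d. x $ i * 1\<^sub>m d $$ (i, j)) = (\<Sum>i<d. x $ i * (if i = j then 1 else 0))"
    by (rule sum.cong) (use j in auto)
  also have "\<dots> = x $ j" by (rule sum_delta_mult(2)[OF j])
  finally show "aff d (1\<^sub>m d) v x $ j = (x + v) $ j" unfolding aff_def using j assms by simp
qed (insert assms, auto simp: aff_def)

lemma aff1: "aff 1 M v x = vec1 (x $ 0 * M $$ (0,0) + v $ 0)"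
  unfolding aff_def vec1_def by (rule eq_vecI) auto

lemma aff2: "aff 2 M v x = vec2 (x $ 0 * M $$ (0,0) + x $ 1 * M $$ (1,0) + v $ 0) (x $ 0 * M $$ (0,1) + x $ 1 * M $$ (1,1) + v $ 1)"
  unfolding aff_def vec2_def
proof (rule eq_vecI)
  fix i assume "i < dim_vec (vec 2 (\<lambda>i. if i = 0 then x $ 0 * M $$ (0, 0) + x $ 1 * M $$ (1, 0) + v $ 0
    else x $ 0 * M $$ (0, 1) + x $ 1 * M $$ (1, 1) + v $ 1))"
  hence "i = 0 \<or> i = 1" by auto
  thus "vec 2 (\<lambda>j. (\<Sum>i<2. x $ i * M $$ (i, j)) + v $ j) $ i = vec 2 (\<lambda>i. if i = 0 then x $ 0 * M $$ (0, 0) + x $ 1 * M $$ (1, 0) + v $ 0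
    else x $ 0 * M $$ (0, 1) + x $ 1 * M $$ (1, 1) + v $ 1) $ i"
    by (auto simp: numeral_2_eq_2 lessThan_Suc)
qed auto

lemma char_card_mod_ring: "CHAR('a::prime_card mod_ring) = CARD('a)" by simp

lemma mat1_cases: "A \<in> carrier_mat 1 1 \<Longrightarrow> A = mat 1 1 (\<lambda>_. A $$ (0,0))"
  by (rule eq_matI) auto

lemma CGL_1: "(CGL 1 :: 'a::field mat set) = {mat 1 1 (\<lambda>_. a) | a. a \<noteq> 0 \<and> a + 1 \<noteq> 0}"
proof -
  have "A \<in> CGL 1 \<longleftrightarrow> (\<exists>a. A = mat 1 1 (\<lambda>_. a) \<and> a \<noteq> 0 \<and> a + 1 \<noteq> 0)" for A :: "'a mat"
  proof
    assume "A \<in> CGL 1"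
    hence A: "A \<in> carrier_mat 1 1" and d: "det A \<noteq> 0" "det (A + 1\<^sub>m 1) \<noteq> 0" unfolding CGL_det by auto
    have "det (A + 1\<^sub>m 1) = A $$ (0,0) + 1" using A by (subst det_single) auto
    thus "\<exists>a. A = mat 1 1 (\<lambda>_. a) \<and> a \<noteq> 0 \<and> a + 1 \<noteq> 0"
      using mat1_cases[OF A] d det_single[OF A] by metis
  next
    assume "\<exists>a. A = mat 1 1 (\<lambda>_. a) \<and> a \<noteq> 0 \<and> a + 1 \<noteq> 0"
    then obtain a where A: "A = mat 1 1 (\<lambda>_. a)" "a \<noteq> 0" "a + 1 \<noteq> 0" by auto
    have "det (A + 1\<^sub>m 1) = a + 1" unfolding A by (subst det_single) auto
    moreover have "det A = a" unfolding A by (subst det_single) auto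
    ultimately show "A \<in> CGL 1" unfolding CGL_det using A by auto
  qed
  thus ?thesis by auto
qed

lemma CGL12: assumes "CARD('a::prime_card) = 2" shows "(CGL 1 :: 'a mod_ring mat set) = {}"
proof -
  have two: "(2::'a mod_ring) = 0" using numeral_eq_0_char[OF char_card_mod_ring[where 'a='a], of "num.Bit0 num.One"] assms by simp
  have "a = 0 \<or> a + 1 = 0" for a :: "'a mod_ring"
  proof -
    consider "a = 0" | "a = 1" using mod_ring_elems2[OF assms, of a] by blast
    thus ?thesis
    proof cases
      case 2 thus ?thesis using two by (simp add: one_add_one)
    qed simp
  qed
  thus ?thesis unfolding CGL_1 by auto
qed

lemma CGL13: assumes "CARD('a::prime_card) = 3" shows "(CGL 1 :: 'a mod_ring mat set) = {1\<^sub>m 1}"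
proof -
  have three: "(3::'a mod_ring) = 0" using numeral_eq_0_char[OF char_card_mod_ring[where 'a='a], of "num.Bit1 num.One"] assms by simp
  have two: "(2::'a mod_ring) \<noteq> 0" using numeral_eq_0_char[OF char_card_mod_ring[where 'a='a], of "num.Bit0 num.One"] assms by simp
  have "(2::'a mod_ring) + 1 = 3" by simp
  hence t3: "(2::'a mod_ring) + 1 = 0" using three by simp
  have t21: "(2::'a mod_ring) \<noteq> 1"
  proof
    assume "(2::'a mod_ring) = 1"
    hence "(2::'a mod_ring) - 1 = 1 - 1" by simp
    thus False by simp
  qed
  have "(a \<noteq> 0 \<and> a + 1 \<noteq> 0) \<longleftrightarrow> a = 1" for a :: "'a mod_ring"
  proof -
    consider "a = 0" | "a = 1" | "a = 2" using mod_ring_elems3[OF assms, of a] by blast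
    thus ?thesis
    proof cases
      case 2 thus ?thesis using two by (simp add: one_add_one)
    next
      case 3 thus ?thesis using t3 t21 by simp
    qed simp
  qed
  moreover have "mat 1 1 (\<lambda>_. 1) = (1\<^sub>m 1 :: 'a mod_ring mat)" by (rule eq_matI) auto
  ultimately show ?thesis unfolding CGL_1 by auto
qed

lemma CGL_pow_empty: assumes "CGL d = ({} :: 'a::comm_ring_1 mat set)" shows "CGL_pow d (Suc l) = ({} :: 'a mat set)"
  unfolding CGL_pow_Suc assms by blast

lemma CGL_pow_one: assumes "CGL d = {1\<^sub>m d :: 'a::field mat}" shows "CGL_pow d l = {1\<^sub>m d :: 'a mat}"
proof (induction l)
  case 0 show ?case by (rule CGL_pow_0)
next
  case (Suc l)
  have "{A * X |A X. A \<in> {1\<^sub>m d} \<and> X \<in> {1\<^sub>m d}} = {1\<^sub>m d * 1\<^sub>m d :: 'a mat}" by blast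
  thus ?case unfolding CGL_pow_Suc assms Suc by simp
qed

lemma CT_empty: "CT_aff d {} = {}" unfolding CT_aff_def by blast

lemma CT13: assumes c3: "CARD('a::prime_card) = 3"
  shows "CT_aff 1 {1\<^sub>m 1 :: 'a mod_ring mat} = {x1_3, x3}"
proof -
  have cardO: "card (carrier_vec 1 :: 'a mod_ring vec set) = 3" using card_vec1[where 'a="'a mod_ring"] c3 by simp
  have sig: "aff 1 (1\<^sub>m 1) v x = vec1 (x $ 0 + v $ 0)" for v x :: "'a mod_ring vec"
    unfolding aff1 by simp
  have ct: "cycle_type (carrier_vec 1) (aff 1 (1\<^sub>m 1) v) = (if v $ 0 = 0 then x1_3 else x3)"
    if v: "v \<in> carrier_vec 1" for v :: "'a mod_ring vec"
  proof (cases "v $ 0 = 0")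
    case True
    have "cycle_type (carrier_vec 1) (aff 1 (1\<^sub>m 1) v) = (\<lambda>j. if j = 1 then card (carrier_vec 1 :: 'a mod_ring vec set) else 0)"
      by (rule ct_id[OF finite_vec1]) (metis sig True add_0_right vec1_cases)
    thus ?thesis using True unfolding cardO x1_3_def by simp
  next
    case False
    let ?s = "aff 1 (1\<^sub>m 1) v"
    have pow: "(?s ^^ n) (vec1 a) = vec1 (a + of_nat n * v $ 0)" for n a
    proof (induction n)
      case (Suc n)
      have "(?s ^^ Suc n) (vec1 a) = ?s (vec1 (a + of_nat n * v $ 0))" using Suc by simp
      also have "\<dots> = vec1 (a + of_nat n * v $ 0 + v $ 0)" by (rule trans[OF sig], simp)
      also have "a + of_nat n * v $ 0 + v $ 0 = a + of_nat (Suc n) * v $ 0" by (simp add: distrib_right)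
      finally show ?case .
    qed simp
    have "cycle_type (carrier_vec 1) ?s = (\<lambda>j. if j = card (carrier_vec 1 :: 'a mod_ring vec set) then 1 else 0)"
    proof (rule ct_single)
      have v0: "vec1 (0::'a mod_ring) \<in> carrier_vec 1" by (rule vec1_carrier)
      show "carrier_vec 1 \<noteq> ({} :: 'a mod_ring vec set)" using v0 by (simp only: ex_in_conv[symmetric]) blast
      fix x :: "'a mod_ring vec" assume x: "x \<in> carrier_vec 1"
      obtain a where xa: "x = vec1 a" using vec1_cases[OF x] by blast
      show "cyc_orbit ?s x = carrier_vec 1"
      proof (intro equalityI subsetI)
        fix y assume "y \<in> cyc_orbit ?s x"
        then obtain n where "y = (?s ^^ n) x" unfolding cyc_orbit_def by auto
        thus "y \<in> carrier_vec 1" using pow[of n a] xa by simp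
      next
        fix y :: "'a mod_ring vec" assume y: "y \<in> carrier_vec 1"
        obtain b where yb: "y = vec1 b" using vec1_cases[OF y] by blast
        obtain n where n0: "n < CARD('a)" "(b - a) / v $ 0 = (of_nat n :: 'a mod_ring)"
          using surj_of_nat_mod_ring[of "(b - a) / v $ 0"] by blast
        hence n: "(of_nat n :: 'a mod_ring) = (b - a) / v $ 0" by simp
        have "(?s ^^ n) x = vec1 (a + (b - a) / v $ 0 * v $ 0)"
          using pow[of n a] xa n by simp
        also have "\<dots> = y" using False yb by simp
        finally show "y \<in> cyc_orbit ?s x" unfolding cyc_orbit_def by blast
      qed
    qed
    thus ?thesis using False unfolding cardO x3_def by simp
  qed
  have z: "0\<^sub>v 1 \<in> (carrier_vec 1 :: 'a mod_ring vec set)" by simp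
  have o: "vec1 1 \<in> (carrier_vec 1 :: 'a mod_ring vec set)" by simp
  show ?thesis unfolding CT_aff_def
  proof (intro equalityI subsetI)
    fix f assume "f \<in> {cycle_type (carrier_vec 1) (aff 1 M v) |M v. M \<in> {1\<^sub>m 1 :: 'a mod_ring mat} \<and> v \<in> carrier_vec 1}"
    then obtain v :: "'a mod_ring vec" where "v \<in> carrier_vec 1" "f = cycle_type (carrier_vec 1) (aff 1 (1\<^sub>m 1) v)" by blast
    thus "f \<in> {x1_3, x3}" using ct by auto
  next
    fix f assume "f \<in> {x1_3, x3}"
    moreover have "x1_3 = cycle_type (carrier_vec 1) (aff 1 (1\<^sub>m 1) (0\<^sub>v 1 :: 'a mod_ring vec))" using ct[OF z] by simp
    moreover have "x3 = cycle_type (carrier_vec 1) (aff 1 (1\<^sub>m 1) (vec1 1 :: 'a mod_ring vec))" using ct[OF o] by simp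
    ultimately show "f \<in> {cycle_type (carrier_vec 1) (aff 1 M v) |M v. M \<in> {1\<^sub>m 1 :: 'a mod_ring mat} \<and> v \<in> carrier_vec 1}"
      using z o by blast
  qed
qed

lemma char2_num: assumes "CARD('a::prime_card) = 2"
  shows "(numeral k :: 'a mod_ring) = (if even (numeral k :: nat) then 0 else 1)"
proof -
  have "(numeral k :: 'a mod_ring) = of_nat (numeral k)" by simp
  also have "\<dots> = of_nat (numeral k mod CHAR('a mod_ring))" by (rule of_nat_mod_CHAR[symmetric])
  also have "\<dots> = of_nat (numeral k mod 2)" using assms by simp
  finally have h: "(numeral k :: 'a mod_ring) = of_nat (numeral k mod 2)" .
  show ?thesis unfolding h mod_2_eq_odd by simp
qed

lemma char2_neg: assumes "CARD('a::prime_card) = 2" shows "- (x :: 'a mod_ring) = x"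
proof -
  have "x + x = 2 * x" by simp
  also have "(2::'a mod_ring) = 0" using char2_num[OF assms, of "num.Bit0 num.One"] by simp
  finally have "x + x = 0" by simp
  thus ?thesis by (metis add_eq_0_iff)
qed

lemma mat2_index[simp]: "mat2 a b c d $$ (0,0) = a" "mat2 a b c d $$ (0,1) = b" "mat2 a b c d $$ (1,0) = c" "mat2 a b c d $$ (1,1) = d"
  "mat2 a b c d $$ (0,Suc 0) = b" "mat2 a b c d $$ (Suc 0,0) = c" "mat2 a b c d $$ (Suc 0,Suc 0) = d"
  unfolding mat2_def by auto

lemma mat2_cases: "M \<in> carrier_mat 2 2 \<Longrightarrow> M = mat2 (M $$ (0,0)) (M $$ (0,1)) (M $$ (1,0)) (M $$ (1,1))"
  by (rule eq_matI) (auto simp: mat2_def less_2_cases_iff)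

lemma mat2_eq[simp]: "mat2 a b c d = mat2 a' b' c' d' \<longleftrightarrow> a = a' \<and> b = b' \<and> c = c' \<and> d = d'"
proof
  assume h: "mat2 a b c d = mat2 a' b' c' d'"
  have "mat2 a b c d $$ (0,0) = mat2 a' b' c' d' $$ (0,0)" "mat2 a b c d $$ (0,1) = mat2 a' b' c' d' $$ (0,1)"
    "mat2 a b c d $$ (1,0) = mat2 a' b' c' d' $$ (1,0)" "mat2 a b c d $$ (1,1) = mat2 a' b' c' d' $$ (1,1)"
    using h by simp_all
  thus "a = a' \<and> b = b' \<and> c = c' \<and> d = d'" by simp
qed simp

lemma mat2_mult: "mat2 a b c d * mat2 e f g h = mat2 (a*e+b*g) (a*f+b*h) (c*e+d*g) (c*f+d*h :: 'a::comm_ring_1)"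
  by (rule eq_matI) (auto simp: mat2_def less_Suc_eq scalar_prod_def numeral_2_eq_2 lessThan_Suc atLeast0LessThan)

lemma mat2_one: "1\<^sub>m 2 = mat2 1 0 0 (1 :: 'a::comm_ring_1)"
  by (rule eq_matI) (auto simp: mat2_def less_2_cases_iff)

lemma det_mat2: "det (mat2 a b c d) = a * d - b * (c :: 'a::comm_ring_1)"
  by (subst det2) auto

lemma det_mat2_one: "det (mat2 a b c d + 1\<^sub>m 2) = (a + 1) * (d + 1) - b * (c :: 'a::comm_ring_1)"
  by (subst det2_add) auto

lemma CGL22: assumes c2: "CARD('a::prime_card) = 2"
  shows "(CGL 2 :: 'a mod_ring mat set) = {mat2 0 1 1 1, mat2 1 1 1 0}"
proof -
  note x = mod_ring_elems2[OF c2]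
  have "M \<in> CGL 2 \<longleftrightarrow> M = mat2 0 1 1 1 \<or> M = mat2 1 1 1 0" for M :: "'a mod_ring mat"
  proof
    assume "M \<in> CGL 2"
    hence M: "M \<in> carrier_mat 2 2" and d: "det M \<noteq> 0" "det (M + 1\<^sub>m 2) \<noteq> 0" unfolding CGL_det by auto
    obtain a b c d where Mab: "M = mat2 a b c d" using mat2_cases[OF M] by blast
    show "M = mat2 0 1 1 1 \<or> M = mat2 1 1 1 0" using d unfolding Mab det_mat2 det_mat2_one
      using x[of a] x[of b] x[of c] x[of d] by (elim disjE) (simp_all add: char2_num[OF c2])
  next
    assume "M = mat2 0 1 1 1 \<or> M = mat2 1 1 1 0"
    thus "M \<in> CGL 2" unfolding CGL_det
      by (elim disjE) (simp_all add: det_mat2 det_mat2_one char2_num[OF c2] char2_neg[OF c2])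
  qed
  thus ?thesis by blast
qed

lemma CGL_pow22: assumes c2: "CARD('a::prime_card) = 2" and l: "l \<ge> 2"
  shows "(CGL_pow 2 l :: 'a mod_ring mat set) = {mat2 1 0 0 1, mat2 0 1 1 1, mat2 1 1 1 0}"
  using l
proof (induction l rule: dec_induct)
  let ?A = "mat2 0 1 1 1 :: 'a mod_ring mat" and ?B = "mat2 1 1 1 0 :: 'a mod_ring mat" and ?I = "mat2 1 0 0 1 :: 'a mod_ring mat"
  have p: "?A * ?A = ?B" "?A * ?B = ?I" "?B * ?A = ?I" "?B * ?B = ?A" "?A * ?I = ?A" "?B * ?I = ?B"
    by (simp_all add: mat2_mult char2_num[OF c2])
  {
    case base
    show ?case unfolding CGL_pow_2 CGL22[OF c2]
    proof (intro equalityI subsetI)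
      fix M assume "M \<in> {A * X |A X. A \<in> {?A, ?B} \<and> X \<in> {?A, ?B}}"
      then obtain X Y where "X \<in> {?A, ?B}" "Y \<in> {?A, ?B}" "M = X * Y" by blast
      thus "M \<in> {?I, ?A, ?B}" using p by auto
    next
      fix M assume "M \<in> {?I, ?A, ?B}"
      thus "M \<in> {A * X |A X. A \<in> {?A, ?B} \<and> X \<in> {?A, ?B}}"
        using p by (elim insertE; (simp only: empty_iff)?) (metis (mono_tags, lifting) insertI1 insertI2 mem_Collect_eq)+
    qed
  next
    case (step l)
    show ?case unfolding CGL_pow_Suc CGL22[OF c2] step.IH
    proof (intro equalityI subsetI)
      fix M assume "M \<in> {A * X |A X. A \<in> {?A, ?B} \<and> X \<in> {?I, ?A, ?B}}"
      then obtain X Y where "X \<in> {?A, ?B}" "Y \<in> {?I, ?A, ?B}" "M = X * Y" by blast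
      thus "M \<in> {?I, ?A, ?B}" using p by auto
    next
      fix M assume "M \<in> {?I, ?A, ?B}"
      thus "M \<in> {A * X |A X. A \<in> {?A, ?B} \<and> X \<in> {?I, ?A, ?B}}"
        using p by (elim insertE; (simp only: empty_iff)?) (metis (mono_tags, lifting) insertI1 insertI2 mem_Collect_eq)+
    qed
  }
qed

lemma aff_mat2: "aff 2 (mat2 m00 m01 m10 m11) (vec2 p q) (vec2 a b) = vec2 (a * m00 + b * m10 + p) (a * m01 + b * m11 + q)"
  unfolding aff2 by simp

lemma ct_fix_mat:
  assumes c2: "CARD('a::prime_card) = 2" and v: "v \<in> carrier_vec 2"
    and M: "M = mat2 0 1 1 1 \<or> M = (mat2 1 1 1 0 :: 'a mod_ring mat)"
  shows "cycle_type (carrier_vec 2) (aff 2 M v) = x1x3"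
proof -
  note x = mod_ring_elems2[OF c2]
  obtain p q where vpq: "v = vec2 p q" using vec2_cases[OF v] by blast
  let ?s = "aff 2 M v"
  have sig: "?s (vec2 a b) = vec2 (a * M $$ (0,0) + b * M $$ (1,0) + p) (a * M $$ (0,1) + b * M $$ (1,1) + q)" for a b
    unfolding aff2 vpq by simp
  define x0 where "x0 = (if M = mat2 0 1 1 1 then vec2 q (p + q) else vec2 (p + q) p)"
  have card4: "card (carrier_vec 2 :: 'a mod_ring vec set) = 4" using card_vec2[where 'a="'a mod_ring"] c2 by simp
  show ?thesis
  proof (rule ct_fix3[OF finite_vec2 card4, of x0])
    show "x0 \<in> carrier_vec 2" unfolding x0_def by simp
    show "?s x0 = x0" using M x[of p] x[of q] unfolding x0_def vpq
      by (elim disjE) (simp_all add: aff_mat2 char2_num[OF c2])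
  next
    fix y :: "'a mod_ring vec" assume y: "y \<in> carrier_vec 2"
    obtain a b where yab: "y = vec2 a b" using vec2_cases[OF y] by blast
    show "?s y \<in> carrier_vec 2 \<and> ?s (?s (?s y)) = y" unfolding yab vpq
      using M x[of p] x[of q] x[of a] x[of b]
      by (elim disjE) (simp_all add: aff_mat2 char2_num[OF c2])
    show "y \<noteq> x0 \<Longrightarrow> ?s y \<noteq> y" unfolding yab x0_def vpq
      using M x[of p] x[of q] x[of a] x[of b]
      by (elim disjE) (simp_all add: aff_mat2 char2_num[OF c2])
  qed
qed

lemma ct_id_mat:
  assumes c2: "CARD('a::prime_card) = 2" and v: "v \<in> carrier_vec 2"
  shows "cycle_type (carrier_vec 2) (aff 2 (mat2 1 0 0 1 :: 'a mod_ring mat) v) = (if v = 0\<^sub>v 2 then x1_4 else x2_2)"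
proof -
  have card4: "card (carrier_vec 2 :: 'a mod_ring vec set) = 4" using card_vec2[where 'a="'a mod_ring"] c2 by simp
  have sig: "aff 2 (mat2 1 0 0 1) v x = x + v" if "x \<in> carrier_vec 2" for x :: "'a mod_ring vec"
    unfolding mat2_one[symmetric] by (rule aff_one[OF that v])
  show ?thesis
  proof (cases "v = 0\<^sub>v 2")
    case True
    have "cycle_type (carrier_vec 2) (aff 2 (mat2 1 0 0 1 :: 'a mod_ring mat) v) = (\<lambda>j. if j = 1 then card (carrier_vec 2 :: 'a mod_ring vec set) else 0)"
      by (rule ct_id[OF finite_vec2]) (simp add: sig[unfolded True] True)
    thus ?thesis using True unfolding card4 x1_4_def by simp
  next
    case False
    have vv: "v + v = 0\<^sub>v 2"
    proof (rule eq_vecI)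
      fix i assume "i < dim_vec (0\<^sub>v 2 :: 'a mod_ring vec)"
      hence "i < 2" by simp
      have "v $ i + v $ i = 0" using char2_neg[OF c2, of "v $ i"] by (metis add_eq_0_iff)
      thus "(v + v) $ i = 0\<^sub>v 2 $ i" using \<open>i < 2\<close> v by simp
    qed (insert v, auto)
    have "cycle_type (carrier_vec 2) (aff 2 (mat2 1 0 0 1 :: 'a mod_ring mat) v) = (\<lambda>j. if j = 2 then card (carrier_vec 2 :: 'a mod_ring vec set) div 2 else 0)"
    proof (rule ct_invol[OF finite_vec2])
      fix x :: "'a mod_ring vec" assume x: "x \<in> carrier_vec 2"
      have xv: "x + v \<in> carrier_vec 2" using x v by simp
      have "x + v + v = x + (v + v)" using x v by (simp add: assoc_add_vec)
      also have "\<dots> = x" unfolding vv using x by simp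
      finally have inv: "x + v + v = x" .
      have ne: "x + v \<noteq> x"
      proof
        assume xvx: "x + v = x"
        have "v = 0\<^sub>v 2"
        proof (rule eq_vecI)
          fix i assume "i < dim_vec (0\<^sub>v 2 :: 'a mod_ring vec)"
          hence i: "i < 2" by simp
          have "(x + v) $ i = x $ i" using xvx by simp
          thus "v $ i = 0\<^sub>v 2 $ i" using x v i by simp
        qed (insert v, auto)
        thus False using False by simp
      qed
      show "aff 2 (mat2 1 0 0 1) v x \<in> carrier_vec 2 \<and> aff 2 (mat2 1 0 0 1) v (aff 2 (mat2 1 0 0 1) v x) = x \<and>
        aff 2 (mat2 1 0 0 1) v x \<noteq> x" using sig[OF x] sig[OF xv] xv inv ne by simp
    qed
    moreover have "(\<lambda>j. if j = 2 then card (carrier_vec 2 :: 'a mod_ring vec set) div 2 else 0) = x2_2"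
    proof
      fix j show "(if j = 2 then card (carrier_vec 2 :: 'a mod_ring vec set) div 2 else 0) = x2_2 j"
        unfolding x2_2_def card4 by simp
    qed
    ultimately show ?thesis using False by simp
  qed
qed

lemma CT22: assumes c2: "CARD('a::prime_card) = 2"
  shows "CT_aff 2 {mat2 1 0 0 1, mat2 0 1 1 1, mat2 1 1 1 0 :: 'a mod_ring mat} = {x1_4, x2_2, x1x3}"
  unfolding CT_aff_def
proof (intro equalityI subsetI)
  fix f assume "f \<in> {cycle_type (carrier_vec 2) (aff 2 M v) |M v. M \<in> {mat2 1 0 0 1, mat2 0 1 1 1, mat2 1 1 1 0 :: 'a mod_ring mat} \<and> v \<in> carrier_vec 2}"
  then obtain M and v :: "'a mod_ring vec" where Mv: "M \<in> {mat2 1 0 0 1, mat2 0 1 1 1, mat2 1 1 1 0}" "v \<in> carrier_vec 2"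
    "f = cycle_type (carrier_vec 2) (aff 2 M v)" by blast
  show "f \<in> {x1_4, x2_2, x1x3}"
  proof (cases "M = mat2 1 0 0 1")
    case True thus ?thesis using ct_id_mat[OF c2 Mv(2)] Mv(3) by simp
  next
    case False
    hence "M = mat2 0 1 1 1 \<or> M = mat2 1 1 1 0" using Mv(1) by blast
    thus ?thesis using ct_fix_mat[OF c2 Mv(2)] Mv(3) by simp
  qed
next
  fix f assume f: "f \<in> {x1_4, x2_2, x1x3}"
  have z: "(0\<^sub>v 2 :: 'a mod_ring vec) \<in> carrier_vec 2" by simp
  have o: "(vec2 1 0 :: 'a mod_ring vec) \<in> carrier_vec 2" by simp
  have "vec2 1 0 \<noteq> (0\<^sub>v 2 :: 'a mod_ring vec)"
  proof
    assume "vec2 1 0 = (0\<^sub>v 2 :: 'a mod_ring vec)"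
    hence "vec2 1 0 $ 0 = (0\<^sub>v 2 :: 'a mod_ring vec) $ 0" by simp
    thus False by simp
  qed
  hence e: "x1_4 = cycle_type (carrier_vec 2) (aff 2 (mat2 1 0 0 1 :: 'a mod_ring mat) (0\<^sub>v 2))"
    "x2_2 = cycle_type (carrier_vec 2) (aff 2 (mat2 1 0 0 1 :: 'a mod_ring mat) (vec2 1 0))"
    "x1x3 = cycle_type (carrier_vec 2) (aff 2 (mat2 0 1 1 1 :: 'a mod_ring mat) (0\<^sub>v 2))"
    using ct_id_mat[OF c2 z] ct_id_mat[OF c2 o] ct_fix_mat[OF c2 z] by auto
  show "f \<in> {cycle_type (carrier_vec 2) (aff 2 M v) |M v. M \<in> {mat2 1 0 0 1, mat2 0 1 1 1, mat2 1 1 1 0 :: 'a mod_ring mat} \<and> v \<in> carrier_vec 2}"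
    using f
  proof (elim insertE)
    assume "f = x1_4" thus ?thesis using e(1) z by blast
  next
    assume "f = x2_2" thus ?thesis using e(2) o by blast
  next
    assume "f = x1x3" thus ?thesis using e(3) z by blast
  qed simp
qed

theorem corollary3p3:
  fixes d l :: nat
  assumes "d \<ge> 1" and "l \<ge> 1"
  shows "Gamma TYPE('a::prime_card) d l = CT_aff d (CGL_pow d l :: 'a mod_ring mat set)"
proof (cases "l = 1")
  case True
  have "(CGL_pow d l :: 'a mod_ring mat set) = CGL d" unfolding True by (rule CGL_pow_1)
  thus ?thesis unfolding Gamma_def using True by simp
next
  case False
  hence l2: "l \<ge> 2" using assms(2) by simp
  then obtain l' where l': "l = Suc l'" by (cases l) auto
  consider "d = 1 \<and> CARD('a) = 2" | "d = 1 \<and> CARD('a) = 3" | "d = 2 \<and> CARD('a) = 2"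
    | "(d, CARD('a)) \<notin> {(1,2),(1,3),(2,2)}" by auto
  thus ?thesis
  proof cases
    case 1
    hence "Gamma TYPE('a) d l = {}" unfolding Gamma_def using False by simp
    moreover have "(CGL_pow d l :: 'a mod_ring mat set) = {}" unfolding l' using 1 CGL_pow_empty[OF CGL12[where 'a='a]] by simp
    ultimately show ?thesis unfolding CT_aff_def by simp
  next
    case 2
    hence "Gamma TYPE('a) d l = {x1_3, x3}" unfolding Gamma_def using False by simp
    moreover have "(CGL_pow d l :: 'a mod_ring mat set) = {1\<^sub>m 1}" using 2 CGL_pow_one[OF CGL13[where 'a='a]] by simp
    ultimately show ?thesis using CT13[where 'a='a] 2 by simp
  next
    case 3
    hence "Gamma TYPE('a) d l = {x1_4, x2_2, x1x3}" unfolding Gamma_def using False by simp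
    moreover have "(CGL_pow d l :: 'a mod_ring mat set) = {mat2 1 0 0 1, mat2 0 1 1 1, mat2 1 1 1 0}"
      using 3 CGL_pow22[where 'a='a] l2 by simp
    ultimately show ?thesis using CT22[where 'a='a] 3 by simp
  next
    case 4
    hence "Gamma TYPE('a) d l = CT_aff d (GL d :: 'a mod_ring mat set)" unfolding Gamma_def using False by auto
    moreover have "(CGL_pow d l :: 'a mod_ring mat set) = GL d"
      by (rule CGL_pow_GL[OF good_all[OF assms(1) 4] l2])
    ultimately show ?thesis by simp
  qed
qed


end
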